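(* Let $\star$ be a continuous and sup-continuous triangle function and let $(G,\cdot,D,\star)$ be an invariant probabilistic metric group with identity $e$ (not necessarily complete). Then the group of invertible elements of the monoid $(Lip^1_\star(G,\Delta^+),\odot)$ is $$\mathcal U(Lip^1_\star(G,\Delta^+))=\langle\Pi(G),\mathcal U(\Delta^+)\rangle:=\{\langle f,U\rangle: f\in\Pi(G),\ U\in\mathcal U(\Delta^+)\}.$$ Moreover: (1) for all $f\in\Pi(G)$ and $U\in\mathcal U(\Delta^+)$, $\langle f,U\rangle^{-1}=\langle f^{-1},U^{-1}\rangle$ (where $f^{-1}$ is the inverse of $f$ in the group $(\Pi(G),\odot)$ and $U^{-1}$ the inverse of $U$ in $(\Delta^+,\star)$); (2) if $\mathcal U(\Delta^+)=\{\mathcal H_0\}$, then $(\mathcal U(Lip^1_\star(G,\Delta^+)),\odot,\mathbb D,\star)=(\Pi(G),\odot,\mathbb D,\star)$; (3) if $\mathcal U(\Delta^+)=\{\mathcal H_0\}$ and $G$ is complete, then $(\mathcal U(Lip^1_\star(G,\Delta^+)),\odot,\mathbb D,\star)=(\{\delta_a:a\in G\},\odot,\mathbb D,\star)$, which is isometrically isomorphic (via $\delta$) to $(G,\cdot,D,\star)$.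
   Context: A distribution function is a nondecreasing, left-continuous function $F:[-\infty,+\infty]\to[0,1]$ with $F(-\infty)=0$, $F(+\infty)=1$; $\Delta^+$ is the set of distribution functions with $F(0)=0$, ordered pointwise (a complete lattice with maximum $\mathcal H_0$, $\mathcal H_0(t)=0$ for $t\le0$, $1$ for $t>0$). A triangle function is a binary operation $\star$ on $\Delta^+$ that is commutative, associative, nondecreasing in each argument, with $F\star\mathcal H_0=F$; so $(\Delta^+,\star)$ is a commutative monoid, and $\mathcal U(\Delta^+)$ denotes its group of invertible elements. $\star$ is sup-continuous if $\sup_i(F_i\star L)=(\sup_iF_i)\star L$ for every nonempty family $(F_i)$ and every $L$. $F_n\xrightarrow{w}F$ means $F_n(t)\to F(t)$ at every continuity point $t\in\mathbb R$ of $F$; $\star$ is continuous if $F_n\star L_n\xrightarrow{w}F\star L$ whenever $F_n\xrightarrow{w}F$, $L_n\xrightarrow{w}L$. A probabilistic metric space $(G,D,\star)$ consists of a set $G$, a triangle function $\star$ and $D:G\times G\to\Delta^+$ with (i) $D(p,q)=\mathcal H_0$ iff $p=q$; (ii) $D(p,q)=D(q,p)$; (iii) $D(p,q)\star D(q,r)\le D(p,r)$. If $(G,\cdot)$ is a group and $D(pr,qr)=D(rp,rq)=D(p,q)$ for all $p,q,r$, it is an invariant probabilistic metric group. A sequence $(z_n)$ is Cauchy if $D(z_n,z_p)\xrightarrow{w}\mathcal H_0$ as $n,p\to\infty$; completeness means every Cauchy sequence has a point $z$ with $D(z_n,z)\xrightarrow{w}\mathcal H_0$. $Lip^1_\star(G,\Delta^+)$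 is the set of maps $f:G\to\Delta^+$ with $D(x,y)\star f(y)\le f(x)$ for all $x,y$. $\delta_a(y)=D(y,a)$. For maps $f,g:G\to\Delta^+$, $(f\odot g)(x)=\sup_{y,z\in G,\ yz=x}f(y)\star g(z)$; $(Lip^1_\star(G,\Delta^+),\odot)$ is a monoid with identity $\delta_e$. $\Pi(G)$ is the set of $f\in Lip^1_\star(G,\Delta^+)$ for which there is a Cauchy sequence $(a_n)\subset G$ with $D(a_n,x)\xrightarrow{w}f(x)$ for all $x$; $(\Pi(G),\odot)$ is a group. $\mathbb D(f,g)=\sup_{x\in G}f(x)\star g(x)$ for $f,g\in\Pi(G)$. For $f:G\to\Delta^+$ and $F\in\Delta^+$, $\langle f,F\rangle:G\to\Delta^+$ is $\langle f,F\rangle(x)=f(x)\star F$. *)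

theory Defs
  imports "HOL-Algebra.Group" "HOL-Library.Extended_Real"
begin

type_synonym dfun = "ereal \<Rightarrow> real"

definition distribution_function :: "dfun \<Rightarrow> bool" where
  "distribution_function F \<longleftrightarrow>
     mono F \<and> (\<forall>t. 0 \<le> F t \<and> F t \<le> 1) \<and>
     (\<forall>t::real. ((\<lambda>x::real. F (ereal x)) \<longlongrightarrow> F (ereal t)) (at_left t)) \<and>
     F (-\<infinity>) = 0 \<and> F \<infinity> = 1"

definition Delta_plus :: "dfun set" where
  "Delta_plus = {F. distribution_function F \<and> F 0 = 0}"

definition H0 :: dfun where
  "H0 = (\<lambda>t. if t \<le> 0 then 0 else 1)"

definition dsup :: "dfun set \<Rightarrow> dfun" where
  "dsup S = (\<lambda>t. SUP F\<in>S. F t)"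

definition triangle_function :: "(dfun \<Rightarrow> dfun \<Rightarrow> dfun) \<Rightarrow> bool" where
  "triangle_function T \<longleftrightarrow>
     (\<forall>F\<in>Delta_plus. \<forall>L\<in>Delta_plus. T F L \<in> Delta_plus) \<and>
     (\<forall>F\<in>Delta_plus. \<forall>L\<in>Delta_plus. T F L = T L F) \<and>
     (\<forall>F\<in>Delta_plus. \<forall>L\<in>Delta_plus. \<forall>K\<in>Delta_plus. T (T F L) K = T F (T L K)) \<and>
     (\<forall>F\<in>Delta_plus. \<forall>F'\<in>Delta_plus. \<forall>L\<in>Delta_plus. F \<le> F' \<longrightarrow> T F L \<le> T F' L) \<and>
     (\<forall>F\<in>Delta_plus. T F H0 = F)"

definition sup_continuous_tf :: "(dfun \<Rightarrow> dfun \<Rightarrow> dfun) \<Rightarrow> bool" where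
  "sup_continuous_tf T \<longleftrightarrow>
     (\<forall>S L. S \<subseteq> Delta_plus \<and> S \<noteq> {} \<and> L \<in> Delta_plus \<longrightarrow>
        dsup ((\<lambda>F. T F L) ` S) = T (dsup S) L)"

definition wconv :: "('i \<Rightarrow> dfun) \<Rightarrow> dfun \<Rightarrow> 'i filter \<Rightarrow> bool" where
  "wconv Fs F net \<longleftrightarrow>
     (\<forall>t::real. isCont (\<lambda>x::real. F (ereal x)) t \<longrightarrow>
        ((\<lambda>i. Fs i (ereal t)) \<longlongrightarrow> F (ereal t)) net)"

definition continuous_tf :: "(dfun \<Rightarrow> dfun \<Rightarrow> dfun) \<Rightarrow> bool" where
  "continuous_tf T \<longleftrightarrow>
     (\<forall>Fs F Ls L. range Fs \<subseteq> Delta_plus \<and> F \<in> Delta_plus \<and> range Ls \<subseteq> Delta_plus \<and>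
        L \<in> Delta_plus \<and> wconv Fs F sequentially \<and> wconv Ls L sequentially \<longrightarrow>
        wconv (\<lambda>n. T (Fs n) (Ls n)) (T F L) sequentially)"

definition Delta_monoid :: "(dfun \<Rightarrow> dfun \<Rightarrow> dfun) \<Rightarrow> dfun monoid" where
  "Delta_monoid T = \<lparr>carrier = Delta_plus, mult = T, one = H0\<rparr>"

definition pm_space :: "'a set \<Rightarrow> ('a \<Rightarrow> 'a \<Rightarrow> dfun) \<Rightarrow> (dfun \<Rightarrow> dfun \<Rightarrow> dfun) \<Rightarrow> bool" where
  "pm_space X D T \<longleftrightarrow> triangle_function T \<and>
     (\<forall>p\<in>X. \<forall>q\<in>X. D p q \<in> Delta_plus) \<and>
     (\<forall>p\<in>X. \<forall>q\<in>X. D p q = H0 \<longleftrightarrow> p = q) \<and>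
     (\<forall>p\<in>X. \<forall>q\<in>X. D p q = D q p) \<and>
     (\<forall>p\<in>X. \<forall>q\<in>X. \<forall>r\<in>X. T (D p q) (D q r) \<le> D p r)"

definition invariant_pm_group :: "('a, 'b) monoid_scheme \<Rightarrow> ('a \<Rightarrow> 'a \<Rightarrow> dfun) \<Rightarrow> (dfun \<Rightarrow> dfun \<Rightarrow> dfun) \<Rightarrow> bool" where
  "invariant_pm_group G D T \<longleftrightarrow> group G \<and> pm_space (carrier G) D T \<and>
     (\<forall>p\<in>carrier G. \<forall>q\<in>carrier G. \<forall>r\<in>carrier G.
        D (p \<otimes>\<^bsub>G\<^esub> r) (q \<otimes>\<^bsub>G\<^esub> r) = D p q \<and> D (r \<otimes>\<^bsub>G\<^esub> p) (r \<otimes>\<^bsub>G\<^esub> q) = D p q)"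

definition pm_cauchy :: "'a set \<Rightarrow> ('a \<Rightarrow> 'a \<Rightarrow> dfun) \<Rightarrow> (nat \<Rightarrow> 'a) \<Rightarrow> bool" where
  "pm_cauchy X D z \<longleftrightarrow> range z \<subseteq> X \<and>
     wconv (\<lambda>(n, p). D (z n) (z p)) H0 (sequentially \<times>\<^sub>F sequentially)"

definition pm_complete :: "'a set \<Rightarrow> ('a \<Rightarrow> 'a \<Rightarrow> dfun) \<Rightarrow> bool" where
  "pm_complete X D \<longleftrightarrow>
     (\<forall>z. pm_cauchy X D z \<longrightarrow> (\<exists>x\<in>X. wconv (\<lambda>n. D (z n) x) H0 sequentially))"

definition Lip1 :: "('a, 'b) monoid_scheme \<Rightarrow> ('a \<Rightarrow> 'a \<Rightarrow> dfun) \<Rightarrow> (dfun \<Rightarrow> dfun \<Rightarrow> dfun) \<Rightarrow> ('a \<Rightarrow> dfun) set" where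
  "Lip1 G D T = {f \<in> extensional (carrier G). (\<forall>x\<in>carrier G. f x \<in> Delta_plus) \<and>
      (\<forall>x\<in>carrier G. \<forall>y\<in>carrier G. T (D x y) (f y) \<le> f x)}"

definition pdelta :: "('a, 'b) monoid_scheme \<Rightarrow> ('a \<Rightarrow> 'a \<Rightarrow> dfun) \<Rightarrow> 'a \<Rightarrow> ('a \<Rightarrow> dfun)" where
  "pdelta G D a = restrict (\<lambda>y. D y a) (carrier G)"

definition odot :: "('a, 'b) monoid_scheme \<Rightarrow> (dfun \<Rightarrow> dfun \<Rightarrow> dfun) \<Rightarrow> ('a \<Rightarrow> dfun) \<Rightarrow> ('a \<Rightarrow> dfun) \<Rightarrow> ('a \<Rightarrow> dfun)" where
  "odot G T f g = restrict (\<lambda>x. dsup {T (f y) (g z) | y z. y \<in> carrier G \<and> z \<in> carrier G \<and> y \<otimes>\<^bsub>G\<^esub> z = x}) (carrier G)"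

definition Lip_monoid :: "('a, 'b) monoid_scheme \<Rightarrow> ('a \<Rightarrow> 'a \<Rightarrow> dfun) \<Rightarrow> (dfun \<Rightarrow> dfun \<Rightarrow> dfun) \<Rightarrow> ('a \<Rightarrow> dfun) monoid" where
  "Lip_monoid G D T = \<lparr>carrier = Lip1 G D T, mult = odot G T, one = pdelta G D \<one>\<^bsub>G\<^esub>\<rparr>"

definition PiG :: "('a, 'b) monoid_scheme \<Rightarrow> ('a \<Rightarrow> 'a \<Rightarrow> dfun) \<Rightarrow> (dfun \<Rightarrow> dfun \<Rightarrow> dfun) \<Rightarrow> ('a \<Rightarrow> dfun) set" where
  "PiG G D T = {f \<in> Lip1 G D T. \<exists>a. pm_cauchy (carrier G) D a \<and>
      (\<forall>x\<in>carrier G. wconv (\<lambda>n. D (a n) x) (f x) sequentially)}"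

definition Pi_group :: "('a, 'b) monoid_scheme \<Rightarrow> ('a \<Rightarrow> 'a \<Rightarrow> dfun) \<Rightarrow> (dfun \<Rightarrow> dfun \<Rightarrow> dfun) \<Rightarrow> ('a \<Rightarrow> dfun) monoid" where
  "Pi_group G D T = \<lparr>carrier = PiG G D T, mult = odot G T, one = pdelta G D \<one>\<^bsub>G\<^esub>\<rparr>"

definition DD :: "('a, 'b) monoid_scheme \<Rightarrow> (dfun \<Rightarrow> dfun \<Rightarrow> dfun) \<Rightarrow> ('a \<Rightarrow> dfun) \<Rightarrow> ('a \<Rightarrow> dfun) \<Rightarrow> dfun" where
  "DD G T f g = dsup {T (f x) (g x) | x. x \<in> carrier G}"

definition bracket :: "('a, 'b) monoid_scheme \<Rightarrow> (dfun \<Rightarrow> dfun \<Rightarrow> dfun) \<Rightarrow> ('a \<Rightarrow> dfun) \<Rightarrow> dfun \<Rightarrow> ('a \<Rightarrow> dfun)" where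
  "bracket G T f F = restrict (\<lambda>x. T (f x) F) (carrier G)"

end

theory Submission
  imports Defs "HOL-Analysis.Borel_Space" "HOL-Analysis.Continuum_Not_Denumerable"
begin


section \<open>Basic facts on Delta_plus\<close>

lemma DP_D: assumes "F \<in> Delta_plus"
  shows "mono F" "\<And>t. 0 \<le> F t" "\<And>t. F t \<le> 1" "F (-\<infinity>) = 0" "F \<infinity> = 1" "F 0 = 0"
    "\<And>t::real. ((\<lambda>x::real. F (ereal x)) \<longlongrightarrow> F (ereal t)) (at_left t)"
  using assms unfolding Delta_plus_def distribution_function_def by auto

lemma DP_nonpos: assumes "F \<in> Delta_plus" "t \<le> 0" shows "F t = 0"
proof -
  have "F t \<le> F 0" using DP_D(1)[OF assms(1)] assms(2) by (auto dest: monoD)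
  moreover have "0 \<le> F t" "F 0 = 0" using DP_D(2,6)[OF assms(1)] by auto
  ultimately show ?thesis by linarith
qed

lemma DP_monoR: assumes "F \<in> Delta_plus" shows "mono (\<lambda>x::real. F (ereal x))"
  using DP_D(1)[OF assms] by (auto simp: mono_def)

lemma DP_monoI: assumes "F \<in> Delta_plus" "s \<le> t" shows "F s \<le> F t"
  using DP_D(1)[OF assms(1)] assms(2) by (auto dest: monoD)

lemma H0_in: "H0 \<in> Delta_plus"
proof -
  have lc: "((\<lambda>x::real. H0 (ereal x)) \<longlongrightarrow> H0 (ereal t)) (at_left t)" for t :: real
  proof (cases "t \<le> 0")
    case True
    have "eventually (\<lambda>x. H0 (ereal x) = H0 (ereal t)) (at_left t)"
      unfolding eventually_at_left_field using True by (intro exI[of _ "t - 1"]) (auto simp: H0_def)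
    then show ?thesis by (rule tendsto_eventually)
  next
    case False
    have "eventually (\<lambda>x. H0 (ereal x) = H0 (ereal t)) (at_left t)"
      unfolding eventually_at_left_field using False by (intro exI[of _ "0"]) (auto simp: H0_def)
    then show ?thesis by (rule tendsto_eventually)
  qed
  have "mono H0" unfolding mono_def H0_def by auto
  then show ?thesis unfolding Delta_plus_def distribution_function_def using lc
    by (auto simp: H0_def)
qed

lemma DP_le_H0: assumes "F \<in> Delta_plus" shows "F \<le> H0"
proof (rule le_funI)
  fix t show "F t \<le> H0 t"
    using DP_nonpos[OF assms, of t] DP_D(3)[OF assms, of t] by (auto simp: H0_def)
qed

lemma DP_ext_eq: assumes "F \<in> Delta_plus" "G \<in> Delta_plus" "\<And>s::real. F (ereal s) = G (ereal s)"
  shows "F = G"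
proof
  fix x show "F x = G x" using assms DP_D(4,5)[OF assms(1)] DP_D(4,5)[OF assms(2)]
    by (cases x) auto
qed

lemma DP_le_reals: assumes "F \<in> Delta_plus" "G \<in> Delta_plus" "\<And>s::real. F (ereal s) \<le> G (ereal s)"
  shows "F \<le> G"
proof (rule le_funI)
  fix x show "F x \<le> G x" using assms DP_D(4,5)[OF assms(1)] DP_D(4,5)[OF assms(2)]
    by (cases x) auto
qed

section \<open>Suprema\<close>

lemma dsup_bdd: assumes "S \<subseteq> Delta_plus" shows "bdd_above ((\<lambda>F. F t) ` S)"
  using assms DP_D(3) by (auto intro!: bdd_aboveI[of _ 1])

lemma dsup_upper: assumes "S \<subseteq> Delta_plus" "F \<in> S" shows "F \<le> dsup S"
  unfolding dsup_def using assms by (auto intro!: le_funI cSUP_upper dsup_bdd)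

lemma dsup_least: assumes "S \<noteq> {}" "\<And>F. F \<in> S \<Longrightarrow> F \<le> G" shows "dsup S \<le> G"
  unfolding dsup_def using assms by (auto intro!: le_funI cSUP_least dest: le_funD)

lemma dsup_in: assumes "S \<subseteq> Delta_plus" "S \<noteq> {}" shows "dsup S \<in> Delta_plus"
proof -
  let ?s = "dsup S"
  have up: "F t \<le> ?s t" if "F \<in> S" for F t using dsup_upper[OF assms(1) that] by (auto dest: le_funD)
  obtain F0 where F0: "F0 \<in> S" using assms by auto
  have mono: "mono ?s"
  proof (rule monoI)
    fix x y :: ereal assume "x \<le> y"
    show "?s x \<le> ?s y" unfolding dsup_def
    proof (rule cSUP_least)
      show "S \<noteq> {}" by fact
      fix F assume "F \<in> S"
      then have "F x \<le> F y" using \<open>x \<le> y\<close> assms(1) DP_monoI by blast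
      also have "F y \<le> ?s y" using up[OF \<open>F \<in> S\<close>] .
      finally show "F x \<le> (SUP F\<in>S. F y)" by (simp add: dsup_def)
    qed
  qed
  have ge0: "0 \<le> ?s t" for t using up[OF F0, of t] DP_D(2)[of F0 t] F0 assms(1) by force
  have le1: "?s t \<le> 1" for t unfolding dsup_def using assms DP_D(3) by (auto intro!: cSUP_least)
  have "?s (-\<infinity>) \<le> 0" unfolding dsup_def
    by (intro cSUP_least) (use assms(2) in simp, use assms(1) DP_D(4) in fastforce)
  then have minf: "?s (-\<infinity>) = 0" using ge0[of "-\<infinity>"] by linarith
  have "?s 0 \<le> 0" unfolding dsup_def
    by (intro cSUP_least) (use assms(2) in simp, use assms(1) DP_D(6) in fastforce)
  then have zero: "?s 0 = 0" using ge0[of 0] by linarith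
  have inf: "?s \<infinity> = 1" using le1[of "\<infinity>"] up[OF F0, of "\<infinity>"] DP_D(5)[of F0] F0 assms(1) by force
  have lc: "((\<lambda>x::real. ?s (ereal x)) \<longlongrightarrow> ?s (ereal t)) (at_left t)" for t :: real
  proof (rule order_tendstoI)
    fix a assume "a < ?s (ereal t)"
    then obtain F where F: "F \<in> S" "a < F (ereal t)" unfolding dsup_def
      using less_cSUP_iff[OF assms(2) dsup_bdd[OF assms(1)]] by blast
    have "eventually (\<lambda>x. a < F (ereal x)) (at_left t)"
      using order_tendstoD(1)[OF DP_D(7)[of F t] F(2)] F(1) assms(1) by auto
    then show "eventually (\<lambda>x. a < ?s (ereal x)) (at_left t)"
      by eventually_elim (rule less_le_trans[OF _ up[OF F(1)]])
  next
    fix a assume a: "?s (ereal t) < a"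
    show "eventually (\<lambda>x. ?s (ereal x) < a) (at_left t)"
      unfolding eventually_at_left_field
    proof (intro exI[of _ "t - 1"] conjI allI impI)
      fix y assume "t - 1 < y" "y < t"
      have "?s (ereal y) \<le> ?s (ereal t)" by (rule monoD[OF mono]) (use \<open>y < t\<close> in simp)
      then show "?s (ereal y) < a" using a by linarith
    qed simp
  qed
  show ?thesis unfolding Delta_plus_def distribution_function_def
    using mono ge0 le1 minf zero inf lc by auto
qed

section \<open>Continuity points\<close>

lemma common_cont:
  fixes f g :: "real \<Rightarrow> real"
  assumes "mono f" "mono g" "b < s"
  shows "\<exists>x. b < x \<and> x < s \<and> isCont f x \<and> isCont g x"
proof -
  have "countable ({a. \<not> isCont f a} \<union> {a. \<not> isCont g a})"
    using mono_ctble_discont[OF assms(1)] mono_ctble_discont[OF assms(2)] by auto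
  from open_minus_countable[OF this, of "{b<..<s}"] assms(3) show ?thesis by auto
qed

lemma wconvD: "wconv Fs F net \<Longrightarrow> isCont (\<lambda>x. F (ereal x)) t \<Longrightarrow> ((\<lambda>i. Fs i (ereal t)) \<longlongrightarrow> F (ereal t)) net"
  unfolding wconv_def by auto

lemma wconv_le:
  assumes A: "A \<in> Delta_plus" and B: "B \<in> Delta_plus"
    and cA: "wconv As A net" and cB: "wconv Bs B net" and nb: "net \<noteq> bot"
    and le: "\<And>s::real. eventually (\<lambda>i. As i (ereal s) \<le> Bs i (ereal s)) net"
  shows "A \<le> B"
proof (rule DP_le_reals[OF A B])
  fix s :: real
  show "A (ereal s) \<le> B (ereal s)"
  proof (rule ccontr)
    assume "\<not> ?thesis"
    then have "B (ereal s) < A (ereal s)" by simp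
    from order_tendstoD(1)[OF DP_D(7)[OF A, of s] this]
    obtain b where b: "b < s" "\<And>y. b < y \<Longrightarrow> y < s \<Longrightarrow> B (ereal s) < A (ereal y)"
      unfolding eventually_at_left_field by blast
    obtain x where x: "b < x" "x < s" "isCont (\<lambda>x. A (ereal x)) x" "isCont (\<lambda>x. B (ereal x)) x"
      using common_cont[OF DP_monoR[OF A] DP_monoR[OF B] b(1)] by blast
    have "A (ereal x) \<le> B (ereal x)"
      by (rule tendsto_le[OF nb wconvD[OF cB x(4)] wconvD[OF cA x(3)] le])
    also have "\<dots> \<le> B (ereal s)" using DP_monoI[OF B] x(2) by simp
    finally show False using b(2)[OF x(1,2)] by simp
  qed
qed

lemma wconv_const: "wconv (\<lambda>i. F) F net"
  unfolding wconv_def by auto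




locale TF = fixes T :: "dfun \<Rightarrow> dfun \<Rightarrow> dfun" assumes tf: "triangle_function T"
begin

lemma T_in: "F \<in> Delta_plus \<Longrightarrow> L \<in> Delta_plus \<Longrightarrow> T F L \<in> Delta_plus"
  using tf unfolding triangle_function_def by auto
lemma T_comm: "F \<in> Delta_plus \<Longrightarrow> L \<in> Delta_plus \<Longrightarrow> T F L = T L F"
  using tf unfolding triangle_function_def by auto
lemma T_assoc: "F \<in> Delta_plus \<Longrightarrow> L \<in> Delta_plus \<Longrightarrow> K \<in> Delta_plus \<Longrightarrow> T (T F L) K = T F (T L K)"
  using tf unfolding triangle_function_def by auto
lemma T_mono1: "F \<in> Delta_plus \<Longrightarrow> F' \<in> Delta_plus \<Longrightarrow> L \<in> Delta_plus \<Longrightarrow> F \<le> F' \<Longrightarrow> T F L \<le> T F' L"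
  using tf unfolding triangle_function_def by auto
lemma T_mono2: "F \<in> Delta_plus \<Longrightarrow> L \<in> Delta_plus \<Longrightarrow> L' \<in> Delta_plus \<Longrightarrow> L \<le> L' \<Longrightarrow> T F L \<le> T F L'"
  using T_mono1[of L L' F] T_comm by simp
lemma T_mono: "F \<in> Delta_plus \<Longrightarrow> F' \<in> Delta_plus \<Longrightarrow> L \<in> Delta_plus \<Longrightarrow> L' \<in> Delta_plus \<Longrightarrow> F \<le> F' \<Longrightarrow> L \<le> L' \<Longrightarrow> T F L \<le> T F' L'"
  using T_mono1[of F F' L] T_mono2[of F' L L'] by (meson order_trans)
lemma T_H0r: "F \<in> Delta_plus \<Longrightarrow> T F H0 = F"
  using tf unfolding triangle_function_def by auto
lemma T_H0l: "F \<in> Delta_plus \<Longrightarrow> T H0 F = F"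
  using T_H0r T_comm H0_in by metis
lemma T_le1: "F \<in> Delta_plus \<Longrightarrow> L \<in> Delta_plus \<Longrightarrow> T F L \<le> F"
  using T_mono2[of F L H0] DP_le_H0 H0_in T_H0r by metis
lemma T_le2: "F \<in> Delta_plus \<Longrightarrow> L \<in> Delta_plus \<Longrightarrow> T F L \<le> L"
  using T_le1 T_comm by metis
lemma T_swap4: "a \<in> Delta_plus \<Longrightarrow> b \<in> Delta_plus \<Longrightarrow> c \<in> Delta_plus \<Longrightarrow> d \<in> Delta_plus \<Longrightarrow>
   T (T a b) (T c d) = T (T a c) (T b d)"
  by (metis T_assoc T_comm T_in)

lemma Delta_monoid: "monoid (Delta_monoid T)"
  unfolding Delta_monoid_def by (rule monoidI) (auto simp: T_in T_assoc T_H0l T_H0r H0_in)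

lemma Delta_Units: "Units (Delta_monoid T) = {U \<in> Delta_plus. \<exists>V \<in> Delta_plus. T U V = H0}"
  unfolding Units_def Delta_monoid_def using T_comm by auto

lemma Delta_inv: assumes "U \<in> Delta_plus" "V \<in> Delta_plus" "T U V = H0"
  shows "inv\<^bsub>Delta_monoid T\<^esub> U = V"
proof -
  have "T V U = H0" using assms T_comm by simp
  then show ?thesis using monoid.inv_unique'[OF Delta_monoid, of U V] assms
    by (simp add: Delta_monoid_def)
qed

end

locale PMG = TF T for T +
  fixes G :: "('a, 'b) monoid_scheme" and D :: "'a \<Rightarrow> 'a \<Rightarrow> dfun"
  assumes ipg: "invariant_pm_group G D T" and sc: "sup_continuous_tf T" and cont: "continuous_tf T"

sublocale PMG \<subseteq> G: group G using ipg unfolding invariant_pm_group_def by auto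

context PMG
begin

abbreviation "C \<equiv> carrier G"

lemma pm: "pm_space C D T" using ipg unfolding invariant_pm_group_def by auto

lemma D_in: "p \<in> C \<Longrightarrow> q \<in> C \<Longrightarrow> D p q \<in> Delta_plus"
  using pm unfolding pm_space_def by auto
lemma D_H0: "p \<in> C \<Longrightarrow> q \<in> C \<Longrightarrow> D p q = H0 \<longleftrightarrow> p = q"
  using pm unfolding pm_space_def by auto
lemma D_self: "p \<in> C \<Longrightarrow> D p p = H0" using D_H0 by auto
lemma D_sym: "p \<in> C \<Longrightarrow> q \<in> C \<Longrightarrow> D p q = D q p"
  using pm unfolding pm_space_def by auto
lemma D_tri: "p \<in> C \<Longrightarrow> q \<in> C \<Longrightarrow> r \<in> C \<Longrightarrow> T (D p q) (D q r) \<le> D p r"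
  using pm unfolding pm_space_def by auto
lemma D_r: "p \<in> C \<Longrightarrow> q \<in> C \<Longrightarrow> r \<in> C \<Longrightarrow> D (p \<otimes>\<^bsub>G\<^esub> r) (q \<otimes>\<^bsub>G\<^esub> r) = D p q"
  using ipg unfolding invariant_pm_group_def by auto
lemma D_l: "p \<in> C \<Longrightarrow> q \<in> C \<Longrightarrow> r \<in> C \<Longrightarrow> D (r \<otimes>\<^bsub>G\<^esub> p) (r \<otimes>\<^bsub>G\<^esub> q) = D p q"
  using ipg unfolding invariant_pm_group_def by auto

lemma D_inv: assumes "p \<in> C" "q \<in> C" shows "D (inv\<^bsub>G\<^esub> p) (inv\<^bsub>G\<^esub> q) = D p q"
proof -
  have 1: "D (p \<otimes>\<^bsub>G\<^esub> inv\<^bsub>G\<^esub> p) (p \<otimes>\<^bsub>G\<^esub> inv\<^bsub>G\<^esub> q) = D (inv\<^bsub>G\<^esub> p) (inv\<^bsub>G\<^esub> q)"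
    by (intro D_l) (use assms in simp_all)
  have 2: "D (\<one>\<^bsub>G\<^esub> \<otimes>\<^bsub>G\<^esub> q) ((p \<otimes>\<^bsub>G\<^esub> inv\<^bsub>G\<^esub> q) \<otimes>\<^bsub>G\<^esub> q) = D \<one>\<^bsub>G\<^esub> (p \<otimes>\<^bsub>G\<^esub> inv\<^bsub>G\<^esub> q)"
    by (intro D_r) (use assms in simp_all)
  have 3: "(p \<otimes>\<^bsub>G\<^esub> inv\<^bsub>G\<^esub> q) \<otimes>\<^bsub>G\<^esub> q = p" using assms by (simp add: G.m_assoc)
  have "D (inv\<^bsub>G\<^esub> p) (inv\<^bsub>G\<^esub> q) = D q p" using 1 2 3 assms by simp
  then show ?thesis using D_sym assms by simp
qed

definition OS :: "('a \<Rightarrow> dfun) \<Rightarrow> ('a \<Rightarrow> dfun) \<Rightarrow> 'a \<Rightarrow> dfun set" where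
  "OS f g x = {T (f y) (g z) | y z. y \<in> C \<and> z \<in> C \<and> y \<otimes>\<^bsub>G\<^esub> z = x}"

definition DPv :: "('a \<Rightarrow> dfun) \<Rightarrow> bool" where "DPv f \<longleftrightarrow> (\<forall>x\<in>C. f x \<in> Delta_plus)"

lemma odot_eq: "x \<in> C \<Longrightarrow> odot G T f g x = dsup (OS f g x)"
  unfolding odot_def OS_def by simp

lemma OS_sub: "DPv f \<Longrightarrow> DPv g \<Longrightarrow> OS f g x \<subseteq> Delta_plus"
  unfolding OS_def DPv_def using T_in by auto
lemma OS_mem: "y \<in> C \<Longrightarrow> z \<in> C \<Longrightarrow> T (f y) (g z) \<in> OS f g (y \<otimes>\<^bsub>G\<^esub> z)"
  unfolding OS_def by blast

lemma OS_ne: "x \<in> C \<Longrightarrow> OS f g x \<noteq> {}"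
  using OS_mem[of x "\<one>\<^bsub>G\<^esub>" f g] by auto

lemma odot_in: "DPv f \<Longrightarrow> DPv g \<Longrightarrow> x \<in> C \<Longrightarrow> odot G T f g x \<in> Delta_plus"
  using odot_eq dsup_in OS_sub OS_ne by simp

lemma odot_DPv: "DPv f \<Longrightarrow> DPv g \<Longrightarrow> DPv (odot G T f g)"
  using odot_in DPv_def by auto

lemma odot_ge: assumes "DPv f" "DPv g" "y \<in> C" "z \<in> C"
  shows "T (f y) (g z) \<le> odot G T f g (y \<otimes>\<^bsub>G\<^esub> z)"
  using odot_eq[of "y \<otimes>\<^bsub>G\<^esub> z"] dsup_upper[OF OS_sub[OF assms(1,2)] OS_mem[OF assms(3,4)]] assms(3,4)
  by simp

lemma odot_le: assumes "x \<in> C" "\<And>y z. y \<in> C \<Longrightarrow> z \<in> C \<Longrightarrow> y \<otimes>\<^bsub>G\<^esub> z = x \<Longrightarrow> T (f y) (g z) \<le> H"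
  shows "odot G T f g x \<le> H"
  unfolding odot_eq[OF assms(1)] by (rule dsup_least[OF OS_ne[OF assms(1)]]) (auto simp: OS_def intro: assms(2))

lemma T_dsup_le1: assumes "S \<subseteq> Delta_plus" "S \<noteq> {}" "L \<in> Delta_plus" "\<And>F. F \<in> S \<Longrightarrow> T F L \<le> M"
  shows "T (dsup S) L \<le> M"
proof -
  have "T (dsup S) L = dsup ((\<lambda>F. T F L) ` S)" using sc assms(1-3) unfolding sup_continuous_tf_def by auto
  also have "\<dots> \<le> M" using assms(2,4) by (intro dsup_least) auto
  finally show ?thesis .
qed

lemma T_dsup_le2: assumes "S \<subseteq> Delta_plus" "S \<noteq> {}" "L \<in> Delta_plus" "\<And>F. F \<in> S \<Longrightarrow> T L F \<le> M"
  shows "T L (dsup S) \<le> M"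
  using T_dsup_le1[OF assms(1-3), of M] assms(4) T_comm dsup_in[OF assms(1,2)] assms(1,3)
  by (metis subsetD)

lemma T_odot_le1: assumes "DPv f" "DPv g" "u \<in> C" "L \<in> Delta_plus"
  "\<And>v w. v \<in> C \<Longrightarrow> w \<in> C \<Longrightarrow> v \<otimes>\<^bsub>G\<^esub> w = u \<Longrightarrow> T (T (f v) (g w)) L \<le> M"
  shows "T (odot G T f g u) L \<le> M"
  unfolding odot_eq[OF assms(3)]
  by (rule T_dsup_le1[OF OS_sub[OF assms(1,2)] OS_ne[OF assms(3)] assms(4)]) (use assms(5) in \<open>auto simp: OS_def\<close>)

lemma T_odot_le2: assumes "DPv f" "DPv g" "u \<in> C" "L \<in> Delta_plus"
  "\<And>v w. v \<in> C \<Longrightarrow> w \<in> C \<Longrightarrow> v \<otimes>\<^bsub>G\<^esub> w = u \<Longrightarrow> T L (T (f v) (g w)) \<le> M"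
  shows "T L (odot G T f g u) \<le> M"
  unfolding odot_eq[OF assms(3)]
  by (rule T_dsup_le2[OF OS_sub[OF assms(1,2)] OS_ne[OF assms(3)] assms(4)]) (use assms(5) in \<open>auto simp: OS_def\<close>)

lemma odot_ext: "odot G T f g \<in> extensional C"
  unfolding odot_def by simp

lemma odot_assoc: assumes f: "DPv f" and g: "DPv g" and h: "DPv h"
  shows "odot G T (odot G T f g) h = odot G T f (odot G T g h)"
proof (rule extensionalityI[OF odot_ext odot_ext])
  fix x assume x: "x \<in> C"
  have fg: "DPv (odot G T f g)" and gh: "DPv (odot G T g h)" using odot_DPv assms by auto
  have fv: "f v \<in> Delta_plus" if "v \<in> C" for v using f that DPv_def by auto
  have gv: "g v \<in> Delta_plus" if "v \<in> C" for v using g that DPv_def by auto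
  have hv: "h v \<in> Delta_plus" if "v \<in> C" for v using h that DPv_def by auto
  show "odot G T (odot G T f g) h x = odot G T f (odot G T g h) x"
  proof (rule order_antisym)
    show "odot G T (odot G T f g) h x \<le> odot G T f (odot G T g h) x"
    proof (rule odot_le[OF x])
      fix u z assume uz: "u \<in> C" "z \<in> C" "u \<otimes>\<^bsub>G\<^esub> z = x"
      show "T (odot G T f g u) (h z) \<le> odot G T f (odot G T g h) x"
      proof (rule T_odot_le1[OF f g uz(1) hv[OF uz(2)]])
        fix v w assume vw: "v \<in> C" "w \<in> C" "v \<otimes>\<^bsub>G\<^esub> w = u"
        have "T (T (f v) (g w)) (h z) = T (f v) (T (g w) (h z))"
          using T_assoc fv gv hv vw uz by simp
        also have "\<dots> \<le> T (f v) (odot G T g h (w \<otimes>\<^bsub>G\<^esub> z))"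
          using T_mono2 odot_ge[OF g h vw(2) uz(2)] fv gv hv vw uz T_in odot_in[OF g h] by simp
        also have "\<dots> \<le> odot G T f (odot G T g h) (v \<otimes>\<^bsub>G\<^esub> (w \<otimes>\<^bsub>G\<^esub> z))"
          using odot_ge[OF f gh] vw uz by simp
        also have "v \<otimes>\<^bsub>G\<^esub> (w \<otimes>\<^bsub>G\<^esub> z) = x" using vw uz by (simp add: G.m_assoc[symmetric])
        finally show "T (T (f v) (g w)) (h z) \<le> odot G T f (odot G T g h) x" .
      qed
    qed
  next
    show "odot G T f (odot G T g h) x \<le> odot G T (odot G T f g) h x"
    proof (rule odot_le[OF x])
      fix v s assume vs: "v \<in> C" "s \<in> C" "v \<otimes>\<^bsub>G\<^esub> s = x"
      show "T (f v) (odot G T g h s) \<le> odot G T (odot G T f g) h x"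
      proof (rule T_odot_le2[OF g h vs(2) fv[OF vs(1)]])
        fix w z assume wz: "w \<in> C" "z \<in> C" "w \<otimes>\<^bsub>G\<^esub> z = s"
        have "T (f v) (T (g w) (h z)) = T (T (f v) (g w)) (h z)"
          using T_assoc fv gv hv vs wz by simp
        also have "\<dots> \<le> T (odot G T f g (v \<otimes>\<^bsub>G\<^esub> w)) (h z)"
          using T_mono1 odot_ge[OF f g vs(1) wz(1)] fv gv hv vs wz T_in odot_in[OF f g] by simp
        also have "\<dots> \<le> odot G T (odot G T f g) h ((v \<otimes>\<^bsub>G\<^esub> w) \<otimes>\<^bsub>G\<^esub> z)"
          using odot_ge[OF fg h] vs wz by simp
        also have "(v \<otimes>\<^bsub>G\<^esub> w) \<otimes>\<^bsub>G\<^esub> z = x" using vs wz by (simp add: G.m_assoc)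
        finally show "T (f v) (T (g w) (h z)) \<le> odot G T (odot G T f g) h x" .
      qed
    qed
  qed
qed

lemma Lip1_D: assumes "f \<in> Lip1 G D T"
  shows "f \<in> extensional C" "DPv f" "\<And>x y. x \<in> C \<Longrightarrow> y \<in> C \<Longrightarrow> T (D x y) (f y) \<le> f x"
  using assms unfolding Lip1_def DPv_def by auto

lemma Lip1_I: assumes "f \<in> extensional C" "DPv f" "\<And>x y. x \<in> C \<Longrightarrow> y \<in> C \<Longrightarrow> T (D x y) (f y) \<le> f x"
  shows "f \<in> Lip1 G D T"
  using assms unfolding Lip1_def DPv_def by auto

lemma odot_Lip1: assumes f: "f \<in> Lip1 G D T" and g: "g \<in> Lip1 G D T"
  shows "odot G T f g \<in> Lip1 G D T"
proof (rule Lip1_I[OF odot_ext odot_DPv[OF Lip1_D(2)[OF f] Lip1_D(2)[OF g]]])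
  note fD = Lip1_D[OF f] and gD = Lip1_D[OF g]
  fix x x' assume xx: "x \<in> C" "x' \<in> C"
  show "T (D x x') (odot G T f g x') \<le> odot G T f g x"
  proof (rule T_odot_le2[OF fD(2) gD(2) xx(2) D_in[OF xx]])
    fix y z assume yz: "y \<in> C" "z \<in> C" "y \<otimes>\<^bsub>G\<^esub> z = x'"
    let ?w = "x \<otimes>\<^bsub>G\<^esub> inv\<^bsub>G\<^esub> z"
    have w: "?w \<in> C" using xx yz by simp
    have "y = x' \<otimes>\<^bsub>G\<^esub> inv\<^bsub>G\<^esub> z" using yz by (auto simp: G.m_assoc)
    then have Dw: "D x x' = D ?w y" using D_r[of x x' "inv\<^bsub>G\<^esub> z"] xx yz by simp
    have fy: "f y \<in> Delta_plus" "g z \<in> Delta_plus" "f ?w \<in> Delta_plus" using fD(2) gD(2) yz w DPv_def by auto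
    have "T (D x x') (T (f y) (g z)) = T (T (D ?w y) (f y)) (g z)"
      using Dw T_assoc fy D_in w yz by simp
    also have "\<dots> \<le> T (f ?w) (g z)" using T_mono1 fD(3)[OF w yz(1)] fy D_in w yz T_in by simp
    also have "\<dots> \<le> odot G T f g (?w \<otimes>\<^bsub>G\<^esub> z)" using odot_ge[OF fD(2) gD(2) w yz(2)] .
    also have "?w \<otimes>\<^bsub>G\<^esub> z = x" using xx yz by (simp add: G.m_assoc)
    finally show "T (D x x') (T (f y) (g z)) \<le> odot G T f g x" .
  qed
qed

abbreviation "dE \<equiv> pdelta G D \<one>\<^bsub>G\<^esub>"

lemma pdelta_Lip1: assumes "a \<in> C" shows "pdelta G D a \<in> Lip1 G D T"
  by (rule Lip1_I) (use assms D_in D_tri in \<open>auto simp: pdelta_def DPv_def\<close>)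

lemma pdelta_app: "y \<in> C \<Longrightarrow> pdelta G D a y = D y a" unfolding pdelta_def by simp

lemma odot_one_r: assumes f: "f \<in> Lip1 G D T" shows "odot G T f dE = f"
proof (rule extensionalityI[OF odot_ext Lip1_D(1)[OF f]])
  note fD = Lip1_D[OF f]
  have dv: "DPv dE" using pdelta_Lip1[of "\<one>\<^bsub>G\<^esub>"] Lip1_D(2) by simp
  fix x assume x: "x \<in> C"
  have fx: "f x \<in> Delta_plus" using fD(2) x DPv_def by auto
  show "odot G T f dE x = f x"
  proof (rule order_antisym)
    show "odot G T f dE x \<le> f x"
    proof (rule odot_le[OF x])
      fix y z assume yz: "y \<in> C" "z \<in> C" "y \<otimes>\<^bsub>G\<^esub> z = x"
      have "D (y \<otimes>\<^bsub>G\<^esub> z) (y \<otimes>\<^bsub>G\<^esub> \<one>\<^bsub>G\<^esub>) = D z \<one>\<^bsub>G\<^esub>" by (intro D_l) (use yz in simp_all)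
      then have "D z \<one>\<^bsub>G\<^esub> = D x y" using yz by simp
      then have "T (f y) (dE z) = T (D x y) (f y)" using pdelta_app yz T_comm D_in x fD(2) DPv_def by auto
      then show "T (f y) (dE z) \<le> f x" using fD(3) x yz by simp
    qed
  next
    have "T (f x) (dE \<one>\<^bsub>G\<^esub>) = f x" using pdelta_app D_self T_H0r fx by simp
    then show "f x \<le> odot G T f dE x" using odot_ge[OF fD(2) dv x, of "\<one>\<^bsub>G\<^esub>"] x by simp
  qed
qed

lemma odot_one_l: assumes f: "f \<in> Lip1 G D T" shows "odot G T dE f = f"
proof (rule extensionalityI[OF odot_ext Lip1_D(1)[OF f]])
  note fD = Lip1_D[OF f]
  have dv: "DPv dE" using pdelta_Lip1[of "\<one>\<^bsub>G\<^esub>"] Lip1_D(2) by simp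
  fix x assume x: "x \<in> C"
  have fx: "f x \<in> Delta_plus" using fD(2) x DPv_def by auto
  show "odot G T dE f x = f x"
  proof (rule order_antisym)
    show "odot G T dE f x \<le> f x"
    proof (rule odot_le[OF x])
      fix y z assume yz: "y \<in> C" "z \<in> C" "y \<otimes>\<^bsub>G\<^esub> z = x"
      have "D (y \<otimes>\<^bsub>G\<^esub> z) (\<one>\<^bsub>G\<^esub> \<otimes>\<^bsub>G\<^esub> z) = D y \<one>\<^bsub>G\<^esub>" by (intro D_r) (use yz in simp_all)
      then have "D y \<one>\<^bsub>G\<^esub> = D x z" using yz by simp
      then have "T (dE y) (f z) = T (D x z) (f z)" using pdelta_app yz by auto
      then show "T (dE y) (f z) \<le> f x" using fD(3) x yz by simp
    qed
  next
    have "T (dE \<one>\<^bsub>G\<^esub>) (f x) = f x" using pdelta_app D_self T_H0l fx by simp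
    then show "f x \<le> odot G T dE f x" using odot_ge[OF dv fD(2) _ x, of "\<one>\<^bsub>G\<^esub>"] x by simp
  qed
qed

lemma Lip_monoid: "monoid (Lip_monoid G D T)"
  unfolding Lip_monoid_def
  by (rule monoidI) (auto simp: odot_Lip1 pdelta_Lip1 odot_one_l odot_one_r intro!: odot_assoc dest: Lip1_D(2))

end



lemma isCont_H0: assumes "t > 0" shows "isCont (\<lambda>x. H0 (ereal x)) t"
proof -
  have "eventually (\<lambda>x. H0 (ereal x) = H0 (ereal t)) (at t)"
    unfolding eventually_at using assms
    by (intro exI[of _ t]) (auto simp: H0_def dist_real_def)
  then show ?thesis unfolding isCont_def by (rule tendsto_eventually)
qed

lemma wconv_H0I:
  assumes "\<And>i. Fs i \<in> Delta_plus"
    and "\<And>t e. t > 0 \<Longrightarrow> e > 0 \<Longrightarrow> eventually (\<lambda>i. 1 - e < Fs i (ereal t)) net"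
  shows "wconv Fs H0 net"
  unfolding wconv_def
proof (intro allI impI)
  fix t :: real
  show "((\<lambda>i. Fs i (ereal t)) \<longlongrightarrow> H0 (ereal t)) net"
  proof (cases "t \<le> 0")
    case True
    then have "Fs i (ereal t) = H0 (ereal t)" for i using DP_nonpos[OF assms(1)] by (simp add: H0_def)
    then show ?thesis by simp
  next
    case False
    then have h: "H0 (ereal t) = 1" by (simp add: H0_def)
    show ?thesis unfolding h
    proof (rule order_tendstoI)
      fix a :: real assume "a < 1"
      then show "eventually (\<lambda>i. a < Fs i (ereal t)) net" using assms(2)[of t "1 - a"] False by simp
    next
      fix a :: real assume "1 < a"
      then show "eventually (\<lambda>i. Fs i (ereal t) < a) net"
        using DP_D(3)[OF assms(1)] by (intro always_eventually) (meson le_less_trans)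
    qed
  qed
qed

lemma wconv_H0_lower:
  assumes "\<And>i. Fs i \<in> Delta_plus" "wconv Ls H0 net" "eventually (\<lambda>i. Ls i \<le> Fs i) net"
  shows "wconv Fs H0 net"
proof (rule wconv_H0I[OF assms(1)])
  fix t e :: real assume te: "t > 0" "e > 0"
  have "eventually (\<lambda>i. 1 - e < Ls i (ereal t)) net"
    using order_tendstoD(1)[OF wconvD[OF assms(2) isCont_H0[OF te(1)]]] te by (simp add: H0_def)
  with assms(3) show "eventually (\<lambda>i. 1 - e < Fs i (ereal t)) net"
    by eventually_elim (auto dest: le_funD[of _ _ "ereal t"])
qed

definition step :: "real \<Rightarrow> real \<Rightarrow> dfun" where
  "step c a = (\<lambda>s. if s \<le> ereal c then 0 else if s = \<infinity> then 1 else a)"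

lemma step_in: assumes "0 \<le> c" "0 \<le> a" "a \<le> 1" shows "step c a \<in> Delta_plus"
proof -
  have mono: "mono (step c a)"
  proof (rule monoI)
    fix x y :: ereal assume "x \<le> y" then show "step c a x \<le> step c a y"
      using assms by (cases x; cases y) (auto simp: step_def)
  qed
  have lc: "((\<lambda>x::real. step c a (ereal x)) \<longlongrightarrow> step c a (ereal t)) (at_left t)" for t :: real
  proof (cases "t \<le> c")
    case True
    have "eventually (\<lambda>x. step c a (ereal x) = step c a (ereal t)) (at_left t)"
      unfolding eventually_at_left_field using True by (intro exI[of _ "t - 1"]) (auto simp: step_def)
    then show ?thesis by (rule tendsto_eventually)
  next
    case False
    have "eventually (\<lambda>x. step c a (ereal x) = step c a (ereal t)) (at_left t)"
      unfolding eventually_at_left_field using False by (intro exI[of _ c]) (auto simp: step_def)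
    then show ?thesis by (rule tendsto_eventually)
  qed
  have vals: "0 \<le> step c a t \<and> step c a t \<le> 1" for t using assms by (auto simp: step_def)
  show ?thesis unfolding Delta_plus_def distribution_function_def
    using mono lc vals assms by (auto simp: step_def)
qed

lemma step_le: assumes "F \<in> Delta_plus" "a \<le> F (ereal c)" shows "step c a \<le> F"
proof (rule le_funI)
  fix s show "step c a s \<le> F s"
  proof (cases "s \<le> ereal c")
    case True then show ?thesis using DP_D(2)[OF assms(1)] by (simp add: step_def)
  next
    case False
    show ?thesis
    proof (cases "s = \<infinity>")
      case True then show ?thesis using DP_D(5)[OF assms(1)] False by (simp add: step_def)
    next
      case False2: False
      have "F (ereal c) \<le> F s" using DP_monoI[OF assms(1)] False by simp
      then show ?thesis using False False2 assms(2) by (simp add: step_def)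
    qed
  qed
qed

lemma step_le_D: assumes "step c a \<le> F" "c < s" shows "a \<le> F (ereal s)"
  using le_funD[OF assms(1), of "ereal s"] assms(2) by (simp add: step_def)

definition EE :: "nat \<Rightarrow> dfun" where
  "EE n = step (1 / (real n + 1)) (1 - 1 / (real n + 1))"

lemma EE_in: "EE n \<in> Delta_plus"
  unfolding EE_def by (rule step_in) (auto simp: field_simps)

lemma EE_mono: assumes "n \<le> m" shows "EE n \<le> EE m"
proof (rule le_funI)
  fix s
  define a where "a = 1 / (real n + 1)"
  define b where "b = 1 / (real m + 1)"
  have ba: "b \<le> a" unfolding a_def b_def using assms by (simp add: frac_le)
  have ab: "1 - a \<le> 1 - b" using ba by simp
  have e: "EE n = step a (1 - a)" "EE m = step b (1 - b)" unfolding EE_def a_def b_def by simp_all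
  show "EE n s \<le> EE m s"
  proof (cases "s \<le> ereal a")
    case True
    then show ?thesis using DP_D(2)[OF EE_in[of m]] unfolding e by (simp add: step_def)
  next
    case False
    then have "\<not> s \<le> ereal b" using ba by (meson ereal_less_eq(3) order_trans)
    then show ?thesis using False ab unfolding e by (simp add: step_def)
  qed
qed

lemma EE_conv: "wconv EE H0 sequentially"
proof (rule wconv_H0I[OF EE_in])
  fix t e :: real assume te: "t > 0" "e > 0"
  then have "0 < min t e" by simp
  from reals_Archimedean[OF this] obtain N where "inverse (real (Suc N)) < min t e" by blast
  then have N: "1 / (real N + 1) < min t e" by (simp add: inverse_eq_divide add.commute)
  show "eventually (\<lambda>i. 1 - e < EE i (ereal t)) sequentially"
    unfolding eventually_sequentially
  proof (intro exI[of _ N] allI impI)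
    fix n assume "N \<le> n"
    then have "1 / (real n + 1) \<le> 1 / (real N + 1)" by (simp add: frac_le)
    with N have "1 / (real n + 1) < t" "1 / (real n + 1) < e" by auto
    then show "1 - e < EE n (ereal t)" unfolding EE_def step_def by auto
  qed
qed

locale TFC = TF T for T + assumes cont: "continuous_tf T"
begin

lemma cont_app:
  assumes "\<And>n. Fs n \<in> Delta_plus" "F \<in> Delta_plus" "\<And>n. Ls n \<in> Delta_plus" "L \<in> Delta_plus"
    "wconv Fs F sequentially" "wconv Ls L sequentially"
  shows "wconv (\<lambda>n. T (Fs n) (Ls n)) (T F L) sequentially"
  using cont assms unfolding continuous_tf_def by blast

lemma sandwich:
  assumes F: "F \<in> Delta_plus" and Fs: "\<And>n. Fs n \<in> Delta_plus" and Ls: "\<And>n. Ls n \<in> Delta_plus"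
    and E: "\<And>n. E n \<in> Delta_plus" and Emono: "\<And>n m. n \<le> m \<Longrightarrow> E n \<le> E m"
    and cE: "wconv E H0 sequentially" and cL: "wconv Ls F sequentially"
    and le1: "\<And>n. Ls n \<le> Fs n" and le2: "\<And>n. T (Fs n) (E n) \<le> F"
  shows "wconv Fs F sequentially"
  unfolding wconv_def
proof (intro allI impI)
  fix t :: real assume ct: "isCont (\<lambda>x. F (ereal x)) t"
  show "((\<lambda>n. Fs n (ereal t)) \<longlongrightarrow> F (ereal t)) sequentially"
  proof (rule order_tendstoI)
    fix a assume "a < F (ereal t)"
    from order_tendstoD(1)[OF wconvD[OF cL ct] this]
    show "eventually (\<lambda>n. a < Fs n (ereal t)) sequentially"
      by eventually_elim (use le1 in \<open>auto dest: le_funD[of _ _ "ereal t"] intro: less_le_trans\<close>)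
  next
    fix a assume a: "F (ereal t) < a"
    show "eventually (\<lambda>n. Fs n (ereal t) < a) sequentially"
    proof (cases "t \<le> 0 \<or> 1 < a")
      case True
      have "Fs n (ereal t) < a" for n
      proof (cases "t \<le> 0")
        case True then show ?thesis using DP_nonpos[OF Fs, of "ereal t"] DP_nonpos[OF F, of "ereal t"] a by simp
      next
        case False then show ?thesis using \<open>t \<le> 0 \<or> 1 < a\<close> DP_D(3)[OF Fs, of n "ereal t"] by simp
      qed
      then show ?thesis by simp
    next
      case False
      then have t: "t > 0" and a1: "a \<le> 1" by auto
      have a0: "0 \<le> a" using DP_D(2)[OF F, of "ereal t"] a by simp
      let ?S = "step t a"
      have S: "?S \<in> Delta_plus" using step_in t a0 a1 by simp
      show ?thesis
      proof (rule ccontr)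
        assume ne: "\<not> eventually (\<lambda>n. Fs n (ereal t) < a) sequentially"
        have TS: "T ?S (E N) \<le> F" for N
        proof -
          obtain n where n: "N \<le> n" "\<not> Fs n (ereal t) < a" using ne unfolding eventually_sequentially by auto
          have "?S \<le> Fs n" using step_le[OF Fs] n by simp
          then have "T ?S (E N) \<le> T (Fs n) (E n)" using T_mono[OF S Fs E E] Emono[OF n(1)] by simp
          also have "\<dots> \<le> F" by (rule le2)
          finally show ?thesis .
        qed
        have cS: "wconv (\<lambda>N. T ?S (E N)) (T ?S H0) sequentially"
          by (rule cont_app[OF S S E H0_in wconv_const cE])
        have "?S \<le> F"
          by (rule wconv_le[OF S F cS[unfolded T_H0r[OF S]] wconv_const]) (simp, intro always_eventually allI, rule le_funD[OF TS])
        from ct have "eventually (\<lambda>x. F (ereal x) < a) (at t)"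
          unfolding isCont_def using order_tendstoD(2) a by blast
        then obtain d where d: "d > 0" "\<And>x. x \<noteq> t \<Longrightarrow> dist x t < d \<Longrightarrow> F (ereal x) < a"
          unfolding eventually_at by blast
        have "F (ereal (t + d/2)) < a" using d by (auto simp: dist_real_def)
        moreover have "a \<le> F (ereal (t + d/2))" using step_le_D[OF \<open>?S \<le> F\<close>] d by simp
        ultimately show False by simp
      qed
    qed
  qed
qed

end



sublocale PMG \<subseteq> TC: TFC T using cont by unfold_locales

context PMG
begin

lemma DPv_Lip1: "f \<in> Lip1 G D T \<Longrightarrow> x \<in> C \<Longrightarrow> f x \<in> Delta_plus"
  using Lip1_D(2) DPv_def by auto

lemma bracket_app: "x \<in> C \<Longrightarrow> bracket G T f U x = T (f x) U"
  unfolding bracket_def by simp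

lemma bracket_Lip1: assumes f: "f \<in> Lip1 G D T" and U: "U \<in> Delta_plus"
  shows "bracket G T f U \<in> Lip1 G D T"
proof (rule Lip1_I)
  show "bracket G T f U \<in> extensional C" unfolding bracket_def by simp
  show "DPv (bracket G T f U)" unfolding DPv_def using bracket_app T_in DPv_Lip1[OF f] U by simp
  fix x y assume xy: "x \<in> C" "y \<in> C"
  have "T (D x y) (bracket G T f U y) = T (T (D x y) (f y)) U"
    using bracket_app xy T_assoc D_in DPv_Lip1[OF f] U by simp
  also have "\<dots> \<le> T (f x) U" using T_mono1 Lip1_D(3)[OF f xy] T_in D_in DPv_Lip1[OF f] U xy by simp
  finally show "T (D x y) (bracket G T f U y) \<le> bracket G T f U x" using bracket_app xy by simp
qed

lemma bracket_H0: assumes f: "f \<in> Lip1 G D T" shows "bracket G T f H0 = f"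
  using Lip1_D(1)[OF f] DPv_Lip1[OF f] T_H0r unfolding bracket_def
  by (intro extensionalityI[of _ C]) auto

lemma bracket_DPv: "DPv f \<Longrightarrow> U \<in> Delta_plus \<Longrightarrow> DPv (bracket G T f U)"
  unfolding DPv_def using bracket_app T_in by simp

lemma odot_bracket: assumes f: "DPv f" and g: "DPv g" and U: "U \<in> Delta_plus" and V: "V \<in> Delta_plus"
  shows "odot G T (bracket G T f U) (bracket G T g V) = bracket G T (odot G T f g) (T U V)"
proof (rule extensionalityI[OF odot_ext])
  show "bracket G T (odot G T f g) (T U V) \<in> extensional C" unfolding bracket_def by simp
  fix x assume x: "x \<in> C"
  have fv: "\<And>y. y \<in> C \<Longrightarrow> f y \<in> Delta_plus" and gv: "\<And>y. y \<in> C \<Longrightarrow> g y \<in> Delta_plus"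
    using f g DPv_def by auto
  have W: "T U V \<in> Delta_plus" using T_in U V by simp
  have bf: "DPv (bracket G T f U)" and bg: "DPv (bracket G T g V)" using bracket_DPv f g U V by auto
  show "odot G T (bracket G T f U) (bracket G T g V) x = bracket G T (odot G T f g) (T U V) x"
  proof (rule order_antisym)
    show "odot G T (bracket G T f U) (bracket G T g V) x \<le> bracket G T (odot G T f g) (T U V) x"
    proof (rule odot_le[OF x])
      fix y z assume yz: "y \<in> C" "z \<in> C" "y \<otimes>\<^bsub>G\<^esub> z = x"
      have "T (bracket G T f U y) (bracket G T g V z) = T (T (f y) (g z)) (T U V)"
        using bracket_app yz T_swap4 fv gv U V by simp
      also have "\<dots> \<le> T (odot G T f g x) (T U V)"
        using T_mono1 odot_ge[OF f g yz(1,2)] yz T_in fv gv W odot_in[OF f g x] by simp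
      finally show "T (bracket G T f U y) (bracket G T g V z) \<le> bracket G T (odot G T f g) (T U V) x"
        using bracket_app x by simp
    qed
  next
    have "T (odot G T f g x) (T U V) \<le> odot G T (bracket G T f U) (bracket G T g V) x"
    proof (rule T_odot_le1[OF f g x W])
      fix v w assume vw: "v \<in> C" "w \<in> C" "v \<otimes>\<^bsub>G\<^esub> w = x"
      have "T (T (f v) (g w)) (T U V) = T (bracket G T f U v) (bracket G T g V w)"
        using bracket_app vw T_swap4 fv gv U V by simp
      also have "\<dots> \<le> odot G T (bracket G T f U) (bracket G T g V) x"
        using odot_ge[OF bf bg vw(1,2)] vw by simp
      finally show "T (T (f v) (g w)) (T U V) \<le> odot G T (bracket G T f U) (bracket G T g V) x" .
    qed
    then show "bracket G T (odot G T f g) (T U V) x \<le> odot G T (bracket G T f U) (bracket G T g V) x"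
      using bracket_app x by simp
  qed
qed

section \<open>The group Pi(G)\<close>

definition pinv :: "('a \<Rightarrow> dfun) \<Rightarrow> ('a \<Rightarrow> dfun)" where
  "pinv f = restrict (\<lambda>x. f (inv\<^bsub>G\<^esub> x)) C"

lemma PiG_D: assumes "f \<in> PiG G D T"
  shows "f \<in> Lip1 G D T" "\<exists>a. pm_cauchy C D a \<and> (\<forall>x\<in>C. wconv (\<lambda>n. D (a n) x) (f x) sequentially)"
  using assms unfolding PiG_def by auto

lemma pinv_Lip1: assumes f: "f \<in> Lip1 G D T" shows "pinv f \<in> Lip1 G D T"
proof (rule Lip1_I)
  show "pinv f \<in> extensional C" unfolding pinv_def by simp
  show "DPv (pinv f)" unfolding DPv_def pinv_def using DPv_Lip1[OF f] by simp
  fix x y assume xy: "x \<in> C" "y \<in> C"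
  have "T (D x y) (pinv f y) = T (D (inv\<^bsub>G\<^esub> x) (inv\<^bsub>G\<^esub> y)) (f (inv\<^bsub>G\<^esub> y))"
    using D_inv xy unfolding pinv_def by simp
  also have "\<dots> \<le> f (inv\<^bsub>G\<^esub> x)" using Lip1_D(3)[OF f] xy by simp
  finally show "T (D x y) (pinv f y) \<le> pinv f x" unfolding pinv_def using xy by simp
qed

lemma pinv_pinv: assumes f: "f \<in> Lip1 G D T" shows "pinv (pinv f) = f"
  using Lip1_D(1)[OF f] unfolding pinv_def
  by (intro extensionalityI[of _ C]) auto

lemma pinv_PiG: assumes f: "f \<in> PiG G D T" shows "pinv f \<in> PiG G D T"
proof -
  obtain a where a: "pm_cauchy C D a" "\<And>x. x \<in> C \<Longrightarrow> wconv (\<lambda>n. D (a n) x) (f x) sequentially"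
    using PiG_D(2)[OF f] by blast
  have aC: "a n \<in> C" for n using a(1) unfolding pm_cauchy_def by auto
  let ?b = "\<lambda>n. inv\<^bsub>G\<^esub> (a n)"
  have "pm_cauchy C D ?b"
    using a(1) aC D_inv unfolding pm_cauchy_def by (auto simp: case_prod_beta)
  moreover have "wconv (\<lambda>n. D (?b n) x) (pinv f x) sequentially" if x: "x \<in> C" for x
  proof -
    have "D (?b n) x = D (a n) (inv\<^bsub>G\<^esub> x)" for n
      using D_inv[of "a n" "inv\<^bsub>G\<^esub> x"] aC x by simp
    then show ?thesis using a(2)[of "inv\<^bsub>G\<^esub> x"] x unfolding pinv_def by simp
  qed
  ultimately show ?thesis unfolding PiG_def using pinv_Lip1[OF PiG_D(1)[OF f]] by blast
qed

lemma f_seq_H0: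
  assumes a: "pm_cauchy C D a" and fD: "\<And>x. x \<in> C \<Longrightarrow> f x \<in> Delta_plus"
    and conv: "\<And>x. x \<in> C \<Longrightarrow> wconv (\<lambda>n. D (a n) x) (f x) sequentially"
  shows "wconv (\<lambda>m. f (a m)) H0 sequentially"
proof -
  have aC: "a n \<in> C" for n using a unfolding pm_cauchy_def by auto
  show ?thesis
  proof (rule wconv_H0I)
    show "f (a i) \<in> Delta_plus" for i using fD aC by simp
    fix t e :: real assume te: "t > 0" "e > 0"
    show "eventually (\<lambda>i. 1 - e < f (a i) (ereal t)) sequentially"
    proof (cases "e \<le> 1")
      case False
      then show ?thesis using DP_D(2)[OF fD[OF aC]] by (intro always_eventually allI) (smt (verit))
    next
      case True
      have ct: "isCont (\<lambda>x. H0 (ereal x)) (t/2)" using isCont_H0 te by simp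
      have "((\<lambda>i. (case i of (n, p) \<Rightarrow> D (a n) (a p)) (ereal (t/2))) \<longlongrightarrow> H0 (ereal (t/2)))
              (sequentially \<times>\<^sub>F sequentially)"
        using a unfolding pm_cauchy_def by (intro wconvD[OF _ ct]) auto
      from order_tendstoD(1)[OF this, of "1 - e/2"] te
      obtain N where N: "\<And>m n. m \<ge> N \<Longrightarrow> n \<ge> N \<Longrightarrow> 1 - e/2 < D (a n) (a m) (ereal (t/2))"
        unfolding eventually_prod_sequentially by (auto simp: H0_def)
      show ?thesis unfolding eventually_sequentially
      proof (intro exI[of _ N] allI impI)
        fix m assume m: "N \<le> m"
        let ?S = "step (t/2) (1 - e/2)"
        have S: "?S \<in> Delta_plus" using step_in te True by simp
        have "?S \<le> f (a m)"
        proof (rule wconv_le[OF S fD[OF aC] wconv_const conv[OF aC]])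
          show "sequentially \<noteq> bot" by simp
          fix s :: real
          show "eventually (\<lambda>n. ?S (ereal s) \<le> D (a n) (a m) (ereal s)) sequentially"
            unfolding eventually_sequentially
          proof (intro exI[of _ N] allI impI)
            fix n assume n: "N \<le> n"
            have "?S \<le> D (a n) (a m)" using step_le[OF D_in[OF aC aC]] N[OF m n] by simp
            then show "?S (ereal s) \<le> D (a n) (a m) (ereal s)" by (rule le_funD)
          qed
        qed
        from step_le_D[OF this, of t] te have "1 - e/2 \<le> f (a m) (ereal t)" by simp
        then show "1 - e < f (a m) (ereal t)" using te by simp
      qed
    qed
  qed
qed

lemma odot_pinv: assumes f: "f \<in> PiG G D T" shows "odot G T f (pinv f) = dE"
proof (rule extensionalityI[OF odot_ext])
  show "dE \<in> extensional C" unfolding pdelta_def by simp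
  have fL: "f \<in> Lip1 G D T" using PiG_D(1)[OF f] .
  have gL: "pinv f \<in> Lip1 G D T" using pinv_Lip1[OF fL] .
  note fv = DPv_Lip1[OF fL]
  have fD: "DPv f" "DPv (pinv f)" using Lip1_D(2) fL gL by auto
  obtain a where a: "pm_cauchy C D a" "\<And>x. x \<in> C \<Longrightarrow> wconv (\<lambda>n. D (a n) x) (f x) sequentially"
    using PiG_D(2)[OF f] by blast
  have aC: "a n \<in> C" for n using a(1) unfolding pm_cauchy_def by auto
  have fa: "wconv (\<lambda>m. f (a m)) H0 sequentially" by (rule f_seq_H0[OF a(1) fv a(2)])
  fix x assume x: "x \<in> C"
  have ox: "odot G T f (pinv f) x \<in> Delta_plus" using odot_in[OF fD x] .
  have Dx1: "D x \<one>\<^bsub>G\<^esub> \<in> Delta_plus" using D_in x by simp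
  show "odot G T f (pinv f) x = dE x"
  proof (rule order_antisym)
    show "odot G T f (pinv f) x \<le> dE x"
    proof (rule odot_le[OF x])
      fix y z assume yz: "y \<in> C" "z \<in> C" "y \<otimes>\<^bsub>G\<^esub> z = x"
      have iz: "inv\<^bsub>G\<^esub> z \<in> C" using yz by simp
      have c: "wconv (\<lambda>n. T (D (a n) y) (D (a n) (inv\<^bsub>G\<^esub> z))) (T (f y) (f (inv\<^bsub>G\<^esub> z))) sequentially"
        by (rule TC.cont_app[OF D_in[OF aC yz(1)] fv[OF yz(1)] D_in[OF aC iz] fv[OF iz] a(2)[OF yz(1)] a(2)[OF iz]])
      have le: "T (D (a n) y) (D (a n) (inv\<^bsub>G\<^esub> z)) \<le> D x \<one>\<^bsub>G\<^esub>" for n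
      proof -
        have "T (D (a n) y) (D (a n) (inv\<^bsub>G\<^esub> z)) = T (D y (a n)) (D (a n) (inv\<^bsub>G\<^esub> z))"
          using D_sym aC yz by simp
        also have "\<dots> \<le> D y (inv\<^bsub>G\<^esub> z)" using D_tri aC yz iz by simp
        also have "D y (inv\<^bsub>G\<^esub> z) = D (y \<otimes>\<^bsub>G\<^esub> z) (inv\<^bsub>G\<^esub> z \<otimes>\<^bsub>G\<^esub> z)"
          by (intro D_r[symmetric]) (use yz in simp_all)
        also have "\<dots> = D x \<one>\<^bsub>G\<^esub>" using yz by simp
        finally show ?thesis .
      qed
      have "T (f y) (f (inv\<^bsub>G\<^esub> z)) \<le> D x \<one>\<^bsub>G\<^esub>"
        by (rule wconv_le[OF T_in[OF fv[OF yz(1)] fv[OF iz]] Dx1 c wconv_const])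
          (simp, intro always_eventually allI, rule le_funD[OF le])
      then show "T (f y) (pinv f z) \<le> dE x" using pdelta_app x yz unfolding pinv_def by simp
    qed
  next
    have c1: "wconv (\<lambda>m. T (D x \<one>\<^bsub>G\<^esub>) (f (a m))) (T (D x \<one>\<^bsub>G\<^esub>) H0) sequentially"
      by (rule TC.cont_app[OF Dx1 Dx1 fv[OF aC] H0_in wconv_const fa])
    have c2: "wconv (\<lambda>m. T (T (D x \<one>\<^bsub>G\<^esub>) (f (a m))) (f (a m))) (T (T (D x \<one>\<^bsub>G\<^esub>) H0) H0) sequentially"
      by (rule TC.cont_app[OF T_in[OF Dx1 fv[OF aC]] T_in[OF Dx1 H0_in] fv[OF aC] H0_in c1 fa])
    have le: "T (T (D x \<one>\<^bsub>G\<^esub>) (f (a m))) (f (a m)) \<le> odot G T f (pinv f) x" for m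
    proof -
      have xa: "x \<otimes>\<^bsub>G\<^esub> a m \<in> C" "inv\<^bsub>G\<^esub> (a m) \<in> C" using x aC by auto
      have "D (x \<otimes>\<^bsub>G\<^esub> a m) (\<one>\<^bsub>G\<^esub> \<otimes>\<^bsub>G\<^esub> a m) = D x \<one>\<^bsub>G\<^esub>"
        by (intro D_r) (use x aC in simp_all)
      then have d: "D (x \<otimes>\<^bsub>G\<^esub> a m) (a m) = D x \<one>\<^bsub>G\<^esub>" using aC by simp
      have "T (D x \<one>\<^bsub>G\<^esub>) (f (a m)) \<le> f (x \<otimes>\<^bsub>G\<^esub> a m)"
        using Lip1_D(3)[OF fL xa(1) aC[of m]] d by simp
      then have "T (T (D x \<one>\<^bsub>G\<^esub>) (f (a m))) (f (a m)) \<le> T (f (x \<otimes>\<^bsub>G\<^esub> a m)) (pinv f (inv\<^bsub>G\<^esub> (a m)))"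
        using T_mono1[OF T_in[OF Dx1 fv[OF aC]] fv[OF xa(1)] fv[OF aC]] aC unfolding pinv_def by simp
      also have "\<dots> \<le> odot G T f (pinv f) ((x \<otimes>\<^bsub>G\<^esub> a m) \<otimes>\<^bsub>G\<^esub> inv\<^bsub>G\<^esub> (a m))"
        by (rule odot_ge[OF fD xa])
      also have "(x \<otimes>\<^bsub>G\<^esub> a m) \<otimes>\<^bsub>G\<^esub> inv\<^bsub>G\<^esub> (a m) = x" using x aC by (simp add: G.m_assoc)
      finally show ?thesis .
    qed
    have "D x \<one>\<^bsub>G\<^esub> \<le> odot G T f (pinv f) x"
      by (rule wconv_le[OF Dx1 ox c2[unfolded T_H0r[OF Dx1] T_H0r[OF Dx1]] wconv_const])
        (simp, intro always_eventually allI, rule le_funD[OF le])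
    then show "dE x \<le> odot G T f (pinv f) x" using pdelta_app x by simp
  qed
qed

lemma odot_pinv_l: assumes f: "f \<in> PiG G D T" shows "odot G T (pinv f) f = dE"
  using odot_pinv[OF pinv_PiG[OF f]] pinv_pinv[OF PiG_D(1)[OF f]] by simp

end



context PMG
begin

lemma dE_one: "dE \<one>\<^bsub>G\<^esub> = H0" using pdelta_app D_self by simp

lemma dE_Lip1: "dE \<in> Lip1 G D T" using pdelta_Lip1 by simp

lemma brackets_units:
  assumes f: "f \<in> PiG G D T" and U: "U \<in> Units (Delta_monoid T)"
  shows "bracket G T f U \<in> Units (Lip_monoid G D T)"
    "inv\<^bsub>Lip_monoid G D T\<^esub> (bracket G T f U) = bracket G T (pinv f) (inv\<^bsub>Delta_monoid T\<^esub> U)"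
    "inv\<^bsub>Pi_group G D T\<^esub> f = pinv f"
proof -
  obtain V where UV: "U \<in> Delta_plus" "V \<in> Delta_plus" "T U V = H0" using U Delta_Units by auto
  have VU: "T V U = H0" using UV T_comm by simp
  have invD: "inv\<^bsub>Delta_monoid T\<^esub> U = V" using Delta_inv UV by simp
  have fL: "f \<in> Lip1 G D T" using PiG_D(1)[OF f] .
  have gL: "pinv f \<in> Lip1 G D T" using pinv_Lip1[OF fL] .
  have b1: "bracket G T f U \<in> Lip1 G D T" using bracket_Lip1 fL UV by simp
  have b2: "bracket G T (pinv f) V \<in> Lip1 G D T" using bracket_Lip1 gL UV by simp
  have p1: "odot G T (bracket G T f U) (bracket G T (pinv f) V) = dE"
    using odot_bracket[OF Lip1_D(2)[OF fL] Lip1_D(2)[OF gL] UV(1,2)] odot_pinv[OF f] UV(3)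
      bracket_H0[OF dE_Lip1] by simp
  have p2: "odot G T (bracket G T (pinv f) V) (bracket G T f U) = dE"
    using odot_bracket[OF Lip1_D(2)[OF gL] Lip1_D(2)[OF fL] UV(2,1)] odot_pinv_l[OF f] VU
      bracket_H0[OF dE_Lip1] by simp
  show "bracket G T f U \<in> Units (Lip_monoid G D T)"
    unfolding Units_def Lip_monoid_def using b1 b2 p1 p2 by auto
  have "bracket G T (pinv f) V = inv\<^bsub>Lip_monoid G D T\<^esub> (bracket G T f U)"
    using monoid.inv_unique'[OF Lip_monoid, of "bracket G T f U" "bracket G T (pinv f) V"] b1 b2 p1 p2
    by (simp add: Lip_monoid_def)
  then show "inv\<^bsub>Lip_monoid G D T\<^esub> (bracket G T f U) = bracket G T (pinv f) (inv\<^bsub>Delta_monoid T\<^esub> U)"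
    using invD by simp
  show "inv\<^bsub>Pi_group G D T\<^esub> f = pinv f"
    unfolding m_inv_def Pi_group_def
  proof (simp, rule the_equality)
    show "pinv f \<in> PiG G D T \<and> odot G T f (pinv f) = dE \<and> odot G T (pinv f) f = dE"
      using pinv_PiG[OF f] odot_pinv[OF f] odot_pinv_l[OF f] by simp
    fix y assume y: "y \<in> PiG G D T \<and> odot G T f y = dE \<and> odot G T y f = dE"
    show "y = pinv f"
      using monoid.inv_unique[OF Lip_monoid, of y f "pinv f"] y PiG_D(1)[of y] fL gL odot_pinv[OF f]
      by (simp add: Lip_monoid_def)
  qed
qed

lemma units_brackets:
  assumes phi: "\<phi> \<in> Units (Lip_monoid G D T)"
  shows "\<exists>f U. \<phi> = bracket G T f U \<and> f \<in> PiG G D T \<and> U \<in> Units (Delta_monoid T)"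
proof -
  obtain \<psi> where \<phi>L: "\<phi> \<in> Lip1 G D T" and \<psi>L: "\<psi> \<in> Lip1 G D T"
    and pp: "odot G T \<phi> \<psi> = dE" and qp: "odot G T \<psi> \<phi> = dE"
    using phi unfolding Units_def Lip_monoid_def by auto
  define U where "U = dsup (\<phi> ` C)"
  define V where "V = dsup (\<psi> ` C)"
  have Cne: "C \<noteq> {}" by auto
  have U: "U \<in> Delta_plus" unfolding U_def by (intro dsup_in) (use DPv_Lip1[OF \<phi>L] in auto)
  have V: "V \<in> Delta_plus" unfolding V_def by (intro dsup_in) (use DPv_Lip1[OF \<psi>L] in auto)
  have \<phi>U: "\<phi> x \<le> U" if "x \<in> C" for x unfolding U_def by (intro dsup_upper) (use DPv_Lip1[OF \<phi>L] that in auto)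
  have \<psi>V: "\<psi> x \<le> V" if "x \<in> C" for x unfolding V_def by (intro dsup_upper) (use DPv_Lip1[OF \<psi>L] that in auto)
  have TUV: "T U V = H0"
  proof (rule order_antisym)
    show "T U V \<le> H0" using DP_le_H0 T_in U V by simp
    have "odot G T \<phi> \<psi> \<one>\<^bsub>G\<^esub> \<le> T U V"
    proof (rule odot_le)
      fix y z assume yz: "y \<in> C" "z \<in> C" "y \<otimes>\<^bsub>G\<^esub> z = \<one>\<^bsub>G\<^esub>"
      show "T (\<phi> y) (\<psi> z) \<le> T U V"
        using T_mono[OF DPv_Lip1[OF \<phi>L yz(1)] U DPv_Lip1[OF \<psi>L yz(2)] V \<phi>U[OF yz(1)] \<psi>V[OF yz(2)]] .
    qed simp
    then show "H0 \<le> T U V" using pp dE_one by simp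
  qed
  have TVU: "T V U = H0" using TUV T_comm U V by simp
  define f where "f = bracket G T \<phi> V"
  define g where "g = bracket G T \<psi> U"
  have fL: "f \<in> Lip1 G D T" unfolding f_def using bracket_Lip1 \<phi>L V by simp
  have gL: "g \<in> Lip1 G D T" unfolding g_def using bracket_Lip1 \<psi>L U by simp
  have fg: "odot G T f g = dE"
    unfolding f_def g_def using odot_bracket[OF Lip1_D(2)[OF \<phi>L] Lip1_D(2)[OF \<psi>L] V U] pp TVU
      bracket_H0[OF dE_Lip1] by simp
  have phif: "\<phi> = bracket G T f U"
  proof (rule extensionalityI[OF Lip1_D(1)[OF \<phi>L]])
    show "bracket G T f U \<in> extensional C" unfolding bracket_def by simp
    fix x assume x: "x \<in> C"
    have "bracket G T f U x = T (T (\<phi> x) V) U" unfolding f_def using bracket_app x by simp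
    also have "\<dots> = \<phi> x" using T_assoc DPv_Lip1[OF \<phi>L x] U V TVU T_H0r by simp
    finally show "\<phi> x = bracket G T f U x" by simp
  qed
  have Uu: "U \<in> Units (Delta_monoid T)" using Delta_Units U V TUV by auto
  have fv: "\<And>x. x \<in> C \<Longrightarrow> f x \<in> Delta_plus" using DPv_Lip1[OF fL] .
  have gv: "\<And>x. x \<in> C \<Longrightarrow> g x \<in> Delta_plus" using DPv_Lip1[OF gL] .
  have key: "T (f y) (g (inv\<^bsub>G\<^esub> w)) \<le> D y w" if yw: "y \<in> C" "w \<in> C" for y w
  proof -
    have "T (f y) (g (inv\<^bsub>G\<^esub> w)) \<le> odot G T f g (y \<otimes>\<^bsub>G\<^esub> inv\<^bsub>G\<^esub> w)"
      using odot_ge[OF Lip1_D(2)[OF fL] Lip1_D(2)[OF gL]] yw by simp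
    also have "\<dots> = D (y \<otimes>\<^bsub>G\<^esub> inv\<^bsub>G\<^esub> w) \<one>\<^bsub>G\<^esub>" using fg pdelta_app yw by simp
    also have "\<dots> = D ((y \<otimes>\<^bsub>G\<^esub> inv\<^bsub>G\<^esub> w) \<otimes>\<^bsub>G\<^esub> w) (\<one>\<^bsub>G\<^esub> \<otimes>\<^bsub>G\<^esub> w)"
      by (intro D_r[symmetric]) (use yw in simp_all)
    also have "\<dots> = D y w" using yw by (simp add: G.m_assoc)
    finally show ?thesis .
  qed
  have choose: "\<exists>y\<in>C. EE n \<le> T (f y) (g (inv\<^bsub>G\<^esub> y))" for n
  proof -
    define r where "r = 1 / (real n + 1)"
    have r: "0 < r" unfolding r_def by simp
    have OSsub: "OS f g \<one>\<^bsub>G\<^esub> \<subseteq> Delta_plus" using OS_sub Lip1_D(2) fL gL by auto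
    have "dsup (OS f g \<one>\<^bsub>G\<^esub>) = H0" using odot_eq[of "\<one>\<^bsub>G\<^esub>" f g] fg dE_one by simp
    then have "(SUP F\<in>OS f g \<one>\<^bsub>G\<^esub>. F (ereal r)) = 1" unfolding dsup_def using r
      by (metis H0_def ereal_less_eq(3) linorder_not_le zero_ereal_def)
    then have "1 - r < (SUP F\<in>OS f g \<one>\<^bsub>G\<^esub>. F (ereal r))" using r by simp
    then obtain F where F: "F \<in> OS f g \<one>\<^bsub>G\<^esub>" "1 - r < F (ereal r)"
      using less_cSUP_iff[OF OS_ne[of "\<one>\<^bsub>G\<^esub>"] dsup_bdd[OF OSsub]] by auto
    then obtain y z where yz: "y \<in> C" "z \<in> C" "y \<otimes>\<^bsub>G\<^esub> z = \<one>\<^bsub>G\<^esub>" "F = T (f y) (g z)"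
      unfolding OS_def by auto
    have "z = inv\<^bsub>G\<^esub> y" using yz G.inv_equality G.inv_comm by metis
    have Fin: "F \<in> Delta_plus" using F(1) OSsub by auto
    have "EE n \<le> F" unfolding EE_def r_def[symmetric] by (rule step_le[OF Fin]) (use F(2) in simp)
    then show ?thesis using yz \<open>z = inv\<^bsub>G\<^esub> y\<close> by auto
  qed
  then obtain Y where Y: "\<And>n. Y n \<in> C" "\<And>n. EE n \<le> T (f (Y n)) (g (inv\<^bsub>G\<^esub> (Y n)))"
    by metis
  have iY: "inv\<^bsub>G\<^esub> (Y n) \<in> C" for n using Y(1) by simp
  have EEf: "EE n \<le> f (Y n)" for n using Y(2)[of n] T_le1[OF fv[OF Y(1)] gv[OF iY]] by (rule order_trans)
  have EEg: "EE n \<le> g (inv\<^bsub>G\<^esub> (Y n))" for n using Y(2)[of n] T_le2[OF fv[OF Y(1)] gv[OF iY]] by (rule order_trans)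
  have cauchy: "pm_cauchy C D Y"
    unfolding pm_cauchy_def
  proof
    show "range Y \<subseteq> C" using Y(1) by auto
    show "wconv (\<lambda>(n, p). D (Y n) (Y p)) H0 (sequentially \<times>\<^sub>F sequentially)"
    proof (rule wconv_H0I)
      show "(case i of (n, p) \<Rightarrow> D (Y n) (Y p)) \<in> Delta_plus" for i using D_in Y(1) by (cases i) auto
      fix t e :: real assume te: "t > 0" "e > 0"
      have c: "wconv (\<lambda>N. T (EE N) (EE N)) (T H0 H0) sequentially"
        by (rule TC.cont_app[OF EE_in H0_in EE_in H0_in EE_conv EE_conv])
      have "eventually (\<lambda>N. 1 - e < T (EE N) (EE N) (ereal t)) sequentially"
        using order_tendstoD(1)[OF wconvD[OF c[unfolded T_H0r[OF H0_in]] isCont_H0[OF te(1)]], of "1 - e"] te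
        by (simp add: H0_def)
      then obtain N0 where N0: "1 - e < T (EE N0) (EE N0) (ereal t)"
        unfolding eventually_sequentially by auto
      show "eventually (\<lambda>i. 1 - e < (case i of (n, p) \<Rightarrow> D (Y n) (Y p)) (ereal t)) (sequentially \<times>\<^sub>F sequentially)"
        unfolding eventually_prod_sequentially
      proof (intro exI[of _ N0] allI impI)
        fix m n assume mn: "N0 \<le> m" "N0 \<le> n"
        have "T (EE N0) (EE N0) \<le> T (EE n) (EE m)" using T_mono EE_in EE_mono mn by simp
        also have "\<dots> \<le> T (f (Y n)) (g (inv\<^bsub>G\<^esub> (Y m)))"
          using T_mono[OF EE_in fv[OF Y(1)] EE_in gv[OF iY] EEf EEg] .
        also have "\<dots> \<le> D (Y n) (Y m)" using key Y(1) by simp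
        finally have "T (EE N0) (EE N0) (ereal t) \<le> D (Y n) (Y m) (ereal t)" by (rule le_funD)
        then show "1 - e < (case (n, m) of (n, p) \<Rightarrow> D (Y n) (Y p)) (ereal t)" using N0 by simp
      qed
    qed
  qed
  have conv: "wconv (\<lambda>n. D (Y n) x) (f x) sequentially" if x: "x \<in> C" for x
  proof (rule TC.sandwich[OF fv[OF x] D_in[OF Y(1) x] T_in[OF fv[OF x] EE_in] EE_in EE_mono EE_conv])
    show "wconv (\<lambda>n. T (f x) (EE n)) (f x) sequentially"
      using TC.cont_app[OF fv[OF x] fv[OF x] EE_in H0_in wconv_const EE_conv] T_H0r fv[OF x] by simp
    fix n
    have "T (f x) (EE n) \<le> T (f x) (g (inv\<^bsub>G\<^esub> (Y n)))" using T_mono2[OF fv[OF x] EE_in gv[OF iY] EEg] .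
    also have "\<dots> \<le> D x (Y n)" using key x Y(1) by simp
    finally show "T (f x) (EE n) \<le> D (Y n) x" using D_sym x Y(1) by simp
    have "T (D (Y n) x) (EE n) \<le> T (D x (Y n)) (f (Y n))"
      using T_mono2[OF D_in[OF x Y(1)] EE_in fv[OF Y(1)] EEf] D_sym x Y(1) by simp
    also have "\<dots> \<le> f x" using Lip1_D(3)[OF fL x Y(1)] .
    finally show "T (D (Y n) x) (EE n) \<le> f x" .
  qed
  have "f \<in> PiG G D T" unfolding PiG_def using fL cauchy conv by blast
  then show ?thesis using phif Uu by blast
qed

end



context PMG
begin

lemma pdelta_PiG: assumes a: "a \<in> C" shows "pdelta G D a \<in> PiG G D T"
proof -
  have e: "(\<lambda>(n::nat, p::nat). D a a) = (\<lambda>i. H0)" using D_self a by auto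
  have "pm_cauchy C D (\<lambda>n. a)" unfolding pm_cauchy_def using a e wconv_const by simp
  moreover have "wconv (\<lambda>n. D a x) (pdelta G D a x) sequentially" if "x \<in> C" for x
    using that a D_sym pdelta_app wconv_const by simp
  ultimately show ?thesis unfolding PiG_def using pdelta_Lip1[OF a] by blast
qed

lemma PiG_pdelta: assumes f: "f \<in> PiG G D T" and comp: "pm_complete C D"
  shows "f \<in> pdelta G D ` C"
proof -
  obtain a where a: "pm_cauchy C D a" "\<And>x. x \<in> C \<Longrightarrow> wconv (\<lambda>n. D (a n) x) (f x) sequentially"
    using PiG_D(2)[OF f] by blast
  have aC: "a n \<in> C" for n using a(1) unfolding pm_cauchy_def by auto
  obtain a0 where a0: "a0 \<in> C" "wconv (\<lambda>n. D (a n) a0) H0 sequentially"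
    using comp a(1) unfolding pm_complete_def by blast
  have fL: "f \<in> Lip1 G D T" using PiG_D(1)[OF f] .
  note fv = DPv_Lip1[OF fL]
  have "f = pdelta G D a0"
  proof (rule extensionalityI[OF Lip1_D(1)[OF fL]])
    show "pdelta G D a0 \<in> extensional C" unfolding pdelta_def by simp
    fix x assume x: "x \<in> C"
    have c0: "wconv (\<lambda>n. D a0 (a n)) H0 sequentially" using a0 D_sym aC by simp
    show "f x = pdelta G D a0 x"
    proof (rule order_antisym)
      have c: "wconv (\<lambda>n. T (D a0 (a n)) (D (a n) x)) (T H0 (f x)) sequentially"
        by (rule TC.cont_app[OF D_in[OF a0(1) aC] H0_in D_in[OF aC x] fv[OF x] c0 a(2)[OF x]])
      have "f x \<le> D a0 x"
        by (rule wconv_le[OF fv[OF x] D_in[OF a0(1) x] c[unfolded T_H0l[OF fv[OF x]]] wconv_const])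
          (simp, intro always_eventually allI, rule le_funD, rule D_tri[OF a0(1) aC x])
      then show "f x \<le> pdelta G D a0 x" using pdelta_app x D_sym a0 by simp
    next
      have c: "wconv (\<lambda>n. T (D (a n) a0) (D a0 x)) (T H0 (D a0 x)) sequentially"
        by (rule TC.cont_app[OF D_in[OF aC a0(1)] H0_in D_in[OF a0(1) x] D_in[OF a0(1) x] a0(2) wconv_const])
      have "D a0 x \<le> f x"
        by (rule wconv_le[OF D_in[OF a0(1) x] fv[OF x] c[unfolded T_H0l[OF D_in[OF a0(1) x]]] a(2)[OF x]])
          (simp, intro always_eventually allI, rule le_funD, rule D_tri[OF aC a0(1) x])
      then show "pdelta G D a0 x \<le> f x" using pdelta_app x D_sym a0 by simp
    qed
  qed
  then show ?thesis using a0 by blast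
qed

lemma pdelta_mult: assumes a: "a \<in> C" and b: "b \<in> C"
  shows "pdelta G D (a \<otimes>\<^bsub>G\<^esub> b) = odot G T (pdelta G D a) (pdelta G D b)"
proof (rule extensionalityI[OF _ odot_ext])
  show "pdelta G D (a \<otimes>\<^bsub>G\<^esub> b) \<in> extensional C" unfolding pdelta_def by simp
  have da: "DPv (pdelta G D a)" "DPv (pdelta G D b)" using Lip1_D(2) pdelta_Lip1 a b by auto
  fix x assume x: "x \<in> C"
  have ab: "a \<otimes>\<^bsub>G\<^esub> b \<in> C" using a b by simp
  show "pdelta G D (a \<otimes>\<^bsub>G\<^esub> b) x = odot G T (pdelta G D a) (pdelta G D b) x"
  proof (rule order_antisym)
    have ax: "inv\<^bsub>G\<^esub> a \<otimes>\<^bsub>G\<^esub> x \<in> C" using a x by simp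
    have e: "D (a \<otimes>\<^bsub>G\<^esub> (inv\<^bsub>G\<^esub> a \<otimes>\<^bsub>G\<^esub> x)) (a \<otimes>\<^bsub>G\<^esub> b) = D (inv\<^bsub>G\<^esub> a \<otimes>\<^bsub>G\<^esub> x) b"
      by (intro D_l) (use a b x in simp_all)
    have e2: "a \<otimes>\<^bsub>G\<^esub> (inv\<^bsub>G\<^esub> a \<otimes>\<^bsub>G\<^esub> x) = x" using a x by (simp add: G.m_assoc[symmetric])
    have "D x (a \<otimes>\<^bsub>G\<^esub> b) = T (pdelta G D a a) (pdelta G D b (inv\<^bsub>G\<^esub> a \<otimes>\<^bsub>G\<^esub> x))"
      using e e2 pdelta_app a ax D_self T_H0l D_in[OF ax b] by simp
    also have "\<dots> \<le> odot G T (pdelta G D a) (pdelta G D b) (a \<otimes>\<^bsub>G\<^esub> (inv\<^bsub>G\<^esub> a \<otimes>\<^bsub>G\<^esub> x))"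
      by (rule odot_ge[OF da a ax])
    finally show "pdelta G D (a \<otimes>\<^bsub>G\<^esub> b) x \<le> odot G T (pdelta G D a) (pdelta G D b) x"
      using e2 pdelta_app x by simp
  next
    show "odot G T (pdelta G D a) (pdelta G D b) x \<le> pdelta G D (a \<otimes>\<^bsub>G\<^esub> b) x"
    proof (rule odot_le[OF x])
      fix y z assume yz: "y \<in> C" "z \<in> C" "y \<otimes>\<^bsub>G\<^esub> z = x"
      have "D (y \<otimes>\<^bsub>G\<^esub> z) (a \<otimes>\<^bsub>G\<^esub> z) = D y a" by (intro D_r) (use yz a in simp_all)
      moreover have "D (a \<otimes>\<^bsub>G\<^esub> z) (a \<otimes>\<^bsub>G\<^esub> b) = D z b" by (intro D_l) (use yz a b in simp_all)
      ultimately have "T (D y a) (D z b) = T (D x (a \<otimes>\<^bsub>G\<^esub> z)) (D (a \<otimes>\<^bsub>G\<^esub> z) (a \<otimes>\<^bsub>G\<^esub> b))"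
        using yz by simp
      also have "\<dots> \<le> D x (a \<otimes>\<^bsub>G\<^esub> b)" using D_tri x yz a b by simp
      finally show "T (pdelta G D a y) (pdelta G D b z) \<le> pdelta G D (a \<otimes>\<^bsub>G\<^esub> b) x"
        using pdelta_app x yz by simp
    qed
  qed
qed

lemma DD_pdelta: assumes a: "a \<in> C" and b: "b \<in> C"
  shows "DD G T (pdelta G D a) (pdelta G D b) = D a b"
proof -
  let ?S = "{T (pdelta G D a x) (pdelta G D b x) |x. x \<in> C}"
  have S: "?S \<subseteq> Delta_plus" using pdelta_app D_in T_in a b by auto
  show ?thesis unfolding DD_def
  proof (rule order_antisym)
    show "dsup ?S \<le> D a b"
    proof (rule dsup_least)
      show "?S \<noteq> {}" by auto
      fix F assume "F \<in> ?S"
      then obtain x where x: "x \<in> C" "F = T (D x a) (D x b)" using pdelta_app by auto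
      then show "F \<le> D a b" using D_tri[OF a x(1) b] D_sym a x(1) by simp
    qed
    have m: "T (pdelta G D a a) (pdelta G D b a) \<in> ?S" using a by blast
    have eq: "T (pdelta G D a a) (pdelta G D b a) = D a b"
      using pdelta_app a b D_self T_H0l D_in D_sym by simp
    show "D a b \<le> dsup ?S" using dsup_upper[OF S m] eq by simp
  qed
qed

lemma main:
  shows "Units (Lip_monoid G D T) =
           {bracket G T f U | f U. f \<in> PiG G D T \<and> U \<in> Units (Delta_monoid T)}
     \<and> (\<forall>f\<in>PiG G D T. \<forall>U\<in>Units (Delta_monoid T).
          inv\<^bsub>Lip_monoid G D T\<^esub> (bracket G T f U)
            = bracket G T (inv\<^bsub>Pi_group G D T\<^esub> f) (inv\<^bsub>Delta_monoid T\<^esub> U))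
     \<and> (Units (Delta_monoid T) = {H0} \<longrightarrow> Units (Lip_monoid G D T) = PiG G D T)
     \<and> (Units (Delta_monoid T) = {H0} \<and> pm_complete (carrier G) D \<longrightarrow>
          Units (Lip_monoid G D T) = pdelta G D ` carrier G
          \<and> pdelta G D \<in> iso G (units_of (Lip_monoid G D T))
          \<and> (\<forall>a\<in>carrier G. \<forall>b\<in>carrier G. DD G T (pdelta G D a) (pdelta G D b) = D a b))"
proof -
  have P1: "Units (Lip_monoid G D T) =
           {bracket G T f U | f U. f \<in> PiG G D T \<and> U \<in> Units (Delta_monoid T)}"
  proof (intro Set.set_eqI iffI)
    fix \<phi> assume "\<phi> \<in> Units (Lip_monoid G D T)"
    from units_brackets[OF this] obtain f U where "\<phi> = bracket G T f U" "f \<in> PiG G D T" "U \<in> Units (Delta_monoid T)"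
      by blast
    then show "\<phi> \<in> {bracket G T f U | f U. f \<in> PiG G D T \<and> U \<in> Units (Delta_monoid T)}" by blast
  next
    fix \<phi> assume "\<phi> \<in> {bracket G T f U | f U. f \<in> PiG G D T \<and> U \<in> Units (Delta_monoid T)}"
    then obtain f U where "\<phi> = bracket G T f U" "f \<in> PiG G D T" "U \<in> Units (Delta_monoid T)"
      by blast
    then show "\<phi> \<in> Units (Lip_monoid G D T)" using brackets_units(1) by simp
  qed
  have P2: "\<forall>f\<in>PiG G D T. \<forall>U\<in>Units (Delta_monoid T).
          inv\<^bsub>Lip_monoid G D T\<^esub> (bracket G T f U)
            = bracket G T (inv\<^bsub>Pi_group G D T\<^esub> f) (inv\<^bsub>Delta_monoid T\<^esub> U)"
  proof (intro ballI)
    fix f U assume f: "f \<in> PiG G D T" and U: "U \<in> Units (Delta_monoid T)"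
    show "inv\<^bsub>Lip_monoid G D T\<^esub> (bracket G T f U)
            = bracket G T (inv\<^bsub>Pi_group G D T\<^esub> f) (inv\<^bsub>Delta_monoid T\<^esub> U)"
      unfolding brackets_units(3)[OF f U] by (rule brackets_units(2)[OF f U])
  qed
  have P3: "Units (Lip_monoid G D T) = PiG G D T" if triv: "Units (Delta_monoid T) = {H0}"
  proof -
    have "{bracket G T f U | f U. f \<in> PiG G D T \<and> U \<in> Units (Delta_monoid T)}
          = {bracket G T f H0 | f. f \<in> PiG G D T}" unfolding triv by blast
    also have "\<dots> = PiG G D T"
    proof (intro Set.set_eqI iffI)
      fix \<phi> assume "\<phi> \<in> {bracket G T f H0 | f. f \<in> PiG G D T}"
      then obtain f where "\<phi> = bracket G T f H0" "f \<in> PiG G D T" by blast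
      then show "\<phi> \<in> PiG G D T" using bracket_H0 PiG_D(1) by simp
    next
      fix \<phi> assume "\<phi> \<in> PiG G D T"
      then have "\<phi> = bracket G T \<phi> H0" using bracket_H0 PiG_D(1) by simp
      then show "\<phi> \<in> {bracket G T f H0 | f. f \<in> PiG G D T}" using \<open>\<phi> \<in> PiG G D T\<close> by blast
    qed
    finally show ?thesis using P1 by simp
  qed
  have P4: "Units (Lip_monoid G D T) = pdelta G D ` carrier G
          \<and> pdelta G D \<in> iso G (units_of (Lip_monoid G D T))
          \<and> (\<forall>a\<in>carrier G. \<forall>b\<in>carrier G. DD G T (pdelta G D a) (pdelta G D b) = D a b)"
    if triv: "Units (Delta_monoid T) = {H0}" and comp: "pm_complete (carrier G) D"
  proof -
    have PP: "PiG G D T = pdelta G D ` C" using PiG_pdelta[OF _ comp] pdelta_PiG by blast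
    have U: "Units (Lip_monoid G D T) = pdelta G D ` C" using P3[OF triv] PP by simp
    have inj: "inj_on (pdelta G D) C"
    proof (rule inj_onI)
      fix a b assume ab: "a \<in> C" "b \<in> C" "pdelta G D a = pdelta G D b"
      have 1: "pdelta G D a a = D a a" "pdelta G D b a = D a b" using pdelta_app ab(1) by auto
      have "D a b = H0" using 1 ab(3) D_self[OF ab(1)] by simp
      then show "a = b" using D_H0 ab by simp
    qed
    have hom: "pdelta G D \<in> hom G (units_of (Lip_monoid G D T))"
      unfolding hom_def units_of_def using U pdelta_mult by (simp add: Lip_monoid_def)
    have "bij_betw (pdelta G D) C (Units (Lip_monoid G D T))"
      unfolding bij_betw_def using inj U by simp
    then have iso: "pdelta G D \<in> iso G (units_of (Lip_monoid G D T))"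
      unfolding iso_def using hom by (simp add: units_of_def)
    show ?thesis using U iso DD_pdelta by simp
  qed
  show ?thesis
    apply (intro conjI impI)
       apply (rule P1)
      apply (rule P2)
     apply (erule P3)
    using P4 by blast+
qed

end

theorem theorem2:
  fixes G :: "('a, 'b) monoid_scheme" and D :: "'a \<Rightarrow> 'a \<Rightarrow> dfun" and T :: "dfun \<Rightarrow> dfun \<Rightarrow> dfun"
  assumes "triangle_function T" and "continuous_tf T" and "sup_continuous_tf T"
    and "invariant_pm_group G D T"
  shows "Units (Lip_monoid G D T) =
           {bracket G T f U | f U. f \<in> PiG G D T \<and> U \<in> Units (Delta_monoid T)}
     \<and> (\<forall>f\<in>PiG G D T. \<forall>U\<in>Units (Delta_monoid T).
          inv\<^bsub>Lip_monoid G D T\<^esub> (bracket G T f U)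
            = bracket G T (inv\<^bsub>Pi_group G D T\<^esub> f) (inv\<^bsub>Delta_monoid T\<^esub> U))
     \<and> (Units (Delta_monoid T) = {H0} \<longrightarrow> Units (Lip_monoid G D T) = PiG G D T)
     \<and> (Units (Delta_monoid T) = {H0} \<and> pm_complete (carrier G) D \<longrightarrow>
          Units (Lip_monoid G D T) = pdelta G D ` carrier G
          \<and> pdelta G D \<in> iso G (units_of (Lip_monoid G D T))
          \<and> (\<forall>a\<in>carrier G. \<forall>b\<in>carrier G. DD G T (pdelta G D a) (pdelta G D b) = D a b))"
proof -
  interpret P: PMG T G D by unfold_locales (use assms in auto)
  show ?thesis by (rule P.main)
qed


end
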